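(* Let $n\ge 3$. For every $\epsilon>0$ and $t\in(0,1]$ there exists $\delta_0\in(0,\tfrac12]$ such that the following holds for all $\delta\in(0,\delta_0]$. Let $F\subset C^2([0,1]^{n-1},[0,1])$ be a non-empty, $\delta$-separated $(\delta,t,\delta^{-\epsilon})$-set which is a cinematic family. Then $$\int_{[0,1]^n}\Big(\sum_{f\in F}\chi_{f^\delta}(x)\Big)^2\,dx\lesssim\delta^{-2\epsilon}|F|^2\delta^{1+t},$$ where the implicit constant depends only on $n$ and the parameters of the cinematic family.
   Context: $|F|$ is cardinality, $\chi_A$ the indicator of $A$. The metric on $C^2([0,1]^{n-1},[0,1])$ is the one induced by the $C^2$ norm. $|A|_\delta$ is the $\delta$-covering number; a bounded set $P$ in a metric space $X$ is a $(\delta,t,C)$-set if $|P\cap B(x,r)|_\delta\le Cr^t|P|_\delta$ for all $x\in X$, $r\ge\delta$. For $f\in C^2([0,1]^{n-1})$, $f^\delta:=\{(x,y)\in[0,1]^{n-1}\times\mathbb{R}: |y-f(x)|\le\delta\}$. Cinematic family: for a domain $U\subset\mathbb{R}^k$, $F\subset C^2(U)$ is a cinematic family with cinematic constant $K$, doubling constant $D$ and modulus of continuity $\alpha$ if: (1) $F$ lies in a ball of diameter $K$ in $C^2(U)$; (2) $F$ is doubling with constant at most $D$; (3) for all $f,g\in F$ and $\xi\in S^{k-1}$, $\inf_{x\in U}\{|f-g|(x)+|\nabla f-\nabla g|(x)+|\nabla_\xi\nabla_\xi(f-g)(x)|\}\ge K^{-1}\|f-g\|_{C^2(U)}$, where $\nabla_\xi\nabla_\xi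 h=\langle\nabla^2h\,\xi,\xi\rangle$; (4) there is an increasing continuous $\alpha:[0,1]\to[0,\infty)$, $\alpha(0)=0$, $0<\alpha(s)\le K^{-1}s$ for $s\in(0,1]$, such that for all $f,g\in F$, $\xi\in S^{k-1}$, sufficiently small $\eta>0$ and $x,y\in U$ with $|x-y|\le\alpha(\eta)$: $|\nabla_\xi\nabla_\xi(f-g)(x)-\nabla_\xi\nabla_\xi(f-g)(y)|\le\eta$. *)

theory Defs
  imports "HOL-Analysis.Analysis"
begin

text \<open>Points of [0,1]^(n-1) are vectors of type real^'m with CARD('m) = n - 1.\<close>

definition unit_cube :: "(real^'m) set" where
  "unit_cube = cbox 0 1"

definition C2_witness ::
  "(real^'m) set \<Rightarrow> (real^'m \<Rightarrow> real) \<Rightarrow> (real^'m \<Rightarrow> real^'m) \<Rightarrow> (real^'m \<Rightarrow> real^'m^'m) \<Rightarrow> bool" where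
  "C2_witness U f Df D2f \<longleftrightarrow>
     (\<forall>x\<in>U. (f has_derivative (\<lambda>h. Df x \<bullet> h)) (at x within U)) \<and>
     (\<forall>x\<in>U. (Df has_derivative (\<lambda>h. D2f x *v h)) (at x within U)) \<and>
     continuous_on U D2f"

definition C2_on :: "(real^'m) set \<Rightarrow> (real^'m \<Rightarrow> real) \<Rightarrow> bool" where
  "C2_on U f \<longleftrightarrow> (\<exists>Df D2f. C2_witness U f Df D2f)"

definition grad_on :: "(real^'m) set \<Rightarrow> (real^'m \<Rightarrow> real) \<Rightarrow> real^'m \<Rightarrow> real^'m" where
  "grad_on U f = (SOME Df. \<exists>D2f. C2_witness U f Df D2f)"

definition hess_on :: "(real^'m) set \<Rightarrow> (real^'m \<Rightarrow> real) \<Rightarrow> real^'m \<Rightarrow> real^'m^'m" where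
  "hess_on U f = (SOME D2f. C2_witness U f (grad_on U f) D2f)"

definition dd2 :: "(real^'m) set \<Rightarrow> (real^'m \<Rightarrow> real) \<Rightarrow> real^'m \<Rightarrow> real^'m \<Rightarrow> real" where
  "dd2 U h \<xi> x = (hess_on U h x *v \<xi>) \<bullet> \<xi>"

definition c2norm :: "(real^'m) set \<Rightarrow> (real^'m \<Rightarrow> real) \<Rightarrow> real" where
  "c2norm U f = (SUP x\<in>U. \<bar>f x\<bar>) + (SUP x\<in>U. norm (grad_on U f x))
                + (SUP x\<in>U. onorm (\<lambda>v. hess_on U f x *v v))"

definition c2dist :: "(real^'m) set \<Rightarrow> (real^'m \<Rightarrow> real) \<Rightarrow> (real^'m \<Rightarrow> real) \<Rightarrow> real" where
  "c2dist U f g = c2norm U (\<lambda>x. f x - g x)"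

definition C2X :: "(real^'m \<Rightarrow> real) set" where
  "C2X = {f. C2_on unit_cube f \<and> (\<forall>x\<in>unit_cube. 0 \<le> f x \<and> f x \<le> 1)}"

definition covnum :: "'a set \<Rightarrow> ('a \<Rightarrow> 'a \<Rightarrow> real) \<Rightarrow> 'a set \<Rightarrow> real \<Rightarrow> nat" where
  "covnum X d A \<delta> = Inf (card ` {C. finite C \<and> C \<subseteq> X \<and> A \<subseteq> (\<Union>c\<in>C. {y. d c y \<le> \<delta>})})"

definition delta_t_C_set :: "'a set \<Rightarrow> ('a \<Rightarrow> 'a \<Rightarrow> real) \<Rightarrow> 'a set \<Rightarrow> real \<Rightarrow> real \<Rightarrow> real \<Rightarrow> bool" where
  "delta_t_C_set X d P \<delta> t C \<longleftrightarrow>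
     (\<exists>x0\<in>X. \<exists>R. \<forall>y\<in>P. d x0 y \<le> R) \<and>
     (\<forall>x\<in>X. \<forall>r\<ge>\<delta>. real (covnum X d (P \<inter> {y. d x y \<le> r}) \<delta>)
                      \<le> C * r powr t * real (covnum X d P \<delta>))"

definition separated :: "('a \<Rightarrow> 'a \<Rightarrow> real) \<Rightarrow> 'a set \<Rightarrow> real \<Rightarrow> bool" where
  "separated d P \<delta> \<longleftrightarrow> (\<forall>x\<in>P. \<forall>y\<in>P. x \<noteq> y \<longrightarrow> d x y \<ge> \<delta>)"

definition doubling :: "('a \<Rightarrow> 'a \<Rightarrow> real) \<Rightarrow> 'a set \<Rightarrow> real \<Rightarrow> bool" where
  "doubling d P D \<longleftrightarrow> (\<forall>x\<in>P. \<forall>r>0. \<exists>C. finite C \<and> C \<subseteq> P \<and> real (card C) \<le> D \<and>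
      {y\<in>P. d x y \<le> r} \<subseteq> (\<Union>c\<in>C. {y. d c y \<le> r / 2}))"

text \<open>Cinematic family with cinematic constant K, doubling constant D, modulus of
  continuity \<alpha>; \<eta>0 is the threshold below which condition (4) is required
  ("sufficiently small \<eta>").\<close>
definition cinematic ::
  "(real^'m) set \<Rightarrow> real \<Rightarrow> real \<Rightarrow> (real \<Rightarrow> real) \<Rightarrow> real \<Rightarrow> (real^'m \<Rightarrow> real) set \<Rightarrow> bool" where
  "cinematic U K D \<alpha> \<eta>0 F \<longleftrightarrow>
     0 < K \<and> (\<forall>f\<in>F. C2_on U f) \<and>
     (\<exists>g. C2_on U g \<and> (\<forall>f\<in>F. c2dist U f g \<le> K / 2)) \<and>
     doubling (c2dist U) F D \<and>
     (\<forall>f\<in>F. \<forall>g\<in>F. \<forall>\<xi>::real^'m. norm \<xi> = 1 \<longrightarrow>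
        (INF x\<in>U. \<bar>f x - g x\<bar> + norm (grad_on U (\<lambda>y. f y - g y) x)
                  + \<bar>dd2 U (\<lambda>y. f y - g y) \<xi> x\<bar>) \<ge> c2dist U f g / K) \<and>
     mono_on {0..1} \<alpha> \<and> continuous_on {0..1} \<alpha> \<and> \<alpha> 0 = 0 \<and>
     (\<forall>s\<in>{0..1}. 0 \<le> \<alpha> s) \<and> (\<forall>s\<in>{0<..1}. 0 < \<alpha> s \<and> \<alpha> s \<le> s / K) \<and>
     0 < \<eta>0 \<and>
     (\<forall>f\<in>F. \<forall>g\<in>F. \<forall>\<xi>::real^'m. \<forall>\<eta>. \<forall>x\<in>U. \<forall>y\<in>U.
        norm \<xi> = 1 \<and> 0 < \<eta> \<and> \<eta> \<le> \<eta>0 \<and> \<eta> \<le> 1 \<and> norm (x - y) \<le> \<alpha> \<eta> \<longrightarrow>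
        \<bar>dd2 U (\<lambda>z. f z - g z) \<xi> x - dd2 U (\<lambda>z. f z - g z) \<xi> y\<bar> \<le> \<eta>)"

definition fdelta :: "(real^'m \<Rightarrow> real) \<Rightarrow> real \<Rightarrow> ((real^'m) \<times> real) set" where
  "fdelta f \<delta> = {(x, y). x \<in> unit_cube \<and> \<bar>y - f x\<bar> \<le> \<delta>}"

end

theory Submission
  imports Defs "HOL-Analysis.Analysis"
begin

lemma TL_core:
  fixes S :: "(real^'m) set"
  assumes S: "S \<in> sets lebesgue" "S \<subseteq> cbox a b" and side: "\<And>j. b$j - a$j = \<tau>"
    and tau: "\<tau> \<ge> 0" and w: "w > 0"
    and diam: "\<And>x t. x \<in> S \<Longrightarrow> x + t *\<^sub>R axis i 1 \<in> S \<Longrightarrow> \<bar>t\<bar> \<le> w"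
  shows "measure lebesgue S \<le> 3 * w * \<tau> ^ (CARD('m) - 1)"
proof -
  define M :: nat where "M = nat \<lceil>\<tau> / w\<rceil> + 1"
  have M1: "\<tau>/w \<le> real M" unfolding M_def by linarith
  have M2: "1 \<le> M" unfolding M_def by simp
  define v :: "real^'m" where "v = (2*w) *\<^sub>R axis i 1"
  define T where "T k = (+) (real k *\<^sub>R v) ` S" for k :: nat
  define b' :: "real^'m" where "b' = b + (2*w*real M) *\<^sub>R axis i 1"
  have Sf: "S \<in> lmeasurable"
    using S fmeasurableI2[OF lmeasurable_cbox] by blast
  have Tm: "T k \<in> lmeasurable" for k
    unfolding T_def by (rule measurable_translation[OF Sf])
  have Tmeas: "measure lebesgue (T k) = measure lebesgue S" for k
    unfolding T_def by (rule measure_translation)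
  have disj: "pairwise (\<lambda>k l. disjnt (T k) (T l)) {..<M}"
  unfolding pairwise_def disjnt_def
  proof (intro ballI impI)
    fix k l :: nat assume "k \<in> {..<M}" "l \<in> {..<M}" "k \<noteq> l"
    show "T k \<inter> T l = {}"
    proof (rule ccontr)
      assume "T k \<inter> T l \<noteq> {}"
      then obtain x y where x: "x \<in> S" and y: "y \<in> S" and eq: "real k *\<^sub>R v + x = real l *\<^sub>R v + y"
        unfolding T_def by auto
      have y1: "y = x + (real k *\<^sub>R v - real l *\<^sub>R v)"
        using eq by (metis add.commute add_diff_cancel_left' diff_add_eq)
      have "real k *\<^sub>R v - real l *\<^sub>R v = ((real k - real l) * (2*w)) *\<^sub>R axis i 1"
        unfolding v_def by (simp only: scaleR_scaleR left_diff_distrib scaleR_left_diff_distrib)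
      with y1 have "y = x + ((real k - real l) * (2*w)) *\<^sub>R axis i 1" by simp
      then have "x + ((real k - real l) * (2*w)) *\<^sub>R axis i 1 \<in> S" using y by simp
      then have "\<bar>(real k - real l) * (2*w)\<bar> \<le> w" by (rule diam[OF x])
      moreover have "\<bar>real k - real l\<bar> \<ge> 1" using \<open>k \<noteq> l\<close> by linarith
      moreover have "\<bar>(real k - real l) * (2*w)\<bar> = \<bar>real k - real l\<bar> * (2*w)"
        using w by (simp add: abs_mult)
      moreover have "2*w \<le> \<bar>real k - real l\<bar> * (2*w)"
        using mult_right_mono[of 1 "\<bar>real k - real l\<bar>" "2*w"] w calculation(2) by simp
      ultimately show False using w by linarith
    qed
  qed
  have sub: "(\<Union>k\<in>{..<M}. T k) \<subseteq> cbox a b'"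
  proof
    fix y assume "y \<in> (\<Union>k\<in>{..<M}. T k)"
    then obtain k x where "k \<in> {..<M}" "x \<in> S" and yeq: "y = real k *\<^sub>R v + x"
      unfolding T_def by auto
    then have k: "real k \<le> real M" by simp
    have xb: "x \<in> cbox a b" using S \<open>x\<in>S\<close> by auto
    show "y \<in> cbox a b'"
      unfolding yeq mem_box_cart
    proof
      fix j
      have k0: "0 \<le> real k * (2*w)" using w by simp
      have k1: "real k * (2*w) \<le> 2*w*real M" using k w by (simp add: mult_right_mono algebra_simps)
      show "a $ j \<le> (real k *\<^sub>R v + x) $ j \<and> (real k *\<^sub>R v + x) $ j \<le> b' $ j"
      proof -
        have c1: "(real k *\<^sub>R v + x) $ j = x$j + (if j = i then real k*(2*w) else 0)"
          by (simp add: v_def axis_def)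
        have c2: "b' $ j = b$j + (if j = i then 2*w*real M else 0)"
          by (simp add: b'_def axis_def)
        have "a$j \<le> x$j" "x$j \<le> b$j" using xb unfolding mem_box_cart by auto
        moreover note k0 k1
        ultimately show ?thesis unfolding c1 c2
          by (smt (verit))
      qed
    qed
  qed
  have "real M * measure lebesgue S = (\<Sum>k\<in>{..<M}. measure lebesgue (T k))"
    by (simp add: Tmeas)
  also have "\<dots> = measure lebesgue (\<Union>k\<in>{..<M}. T k)"
    by (rule measure_UNION'[symmetric]) (use Tm disj in auto)
  also have "\<dots> \<le> measure lebesgue (cbox a b')"
    by (rule measure_mono_fmeasurable[OF sub]) (use Tm in auto)
  also have "\<dots> = (\<Prod>j\<in>UNIV. b'$j - a$j)"
  proof -
    have "cbox a b' \<noteq> {}"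
    proof -
      have "a \<in> cbox a b'" unfolding mem_box_cart
      proof
        fix j
        have "b' $ j = b$j + (if j = i then 2*w*real M else 0)"
          by (simp add: b'_def axis_def)
        moreover have "0 \<le> 2*w*real M" using w by simp
        ultimately show "a $ j \<le> a $ j \<and> a $ j \<le> b' $ j" using side[of j] tau
          by (smt (verit))
      qed
      then show ?thesis by blast
    qed
    then show ?thesis by (simp add: content_cbox_cart)
  qed
  also have "\<dots> = (\<Prod>j\<in>UNIV. \<tau> + (if j = i then 2*w*real M else 0))"
  proof (rule prod.cong)
    fix j
    have "b' $ j = b$j + (if j = i then 2*w*real M else 0)"
      by (simp add: b'_def axis_def)
    then show "b' $ j - a $ j = \<tau> + (if j = i then 2 * w * real M else 0)"
      using side[of j] by simp
  qed simp
  also have "\<dots> = (\<tau> + 2*w*real M) * (\<Prod>j\<in>UNIV-{i}. \<tau> + (if j = i then 2*w*real M else 0))"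
    by (subst prod.remove[of UNIV i]) auto
  also have "(\<Prod>j\<in>UNIV-{i}. \<tau> + (if j = i then 2*w*real M else 0)) = \<tau> ^ (CARD('m) - 1)"
    by (simp add: card_Diff_singleton)
  finally have ineq: "real M * measure lebesgue S \<le> (\<tau> + 2 * w * real M) * \<tau> ^ (CARD('m) - 1)" .
  have "\<tau> \<le> w * real M" using M1 w by (simp add: field_simps)
  then have "(\<tau> + 2 * w * real M) * \<tau> ^ (CARD('m) - 1) \<le> (3 * w * real M) * \<tau> ^ (CARD('m) - 1)"
    by (intro mult_right_mono) (use tau in auto)
  with ineq have "real M * measure lebesgue S \<le> real M * (3 * w * \<tau> ^ (CARD('m) - 1))"
    by (simp add: algebra_simps)
  then show ?thesis using M2 by simp
qed

lemma seg_mvt: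
  fixes f :: "'a::real_normed_vector \<Rightarrow> real"
  assumes Q: "convex Q" "x \<in> Q" "y \<in> Q"
   and df: "\<And>z. z \<in> Q \<Longrightarrow> (f has_derivative D z) (at z within Q)"
  shows "\<exists>\<tau>\<in>{0..1}. f y - f x = D (x + \<tau> *\<^sub>R (y - x)) (y - x)"
proof -
  define p where "p \<tau> = x + \<tau> *\<^sub>R (y - x)" for \<tau> :: real
  have pQ: "p \<tau> \<in> Q" if "\<tau> \<in> {0..1}" for \<tau>
  proof -
    have "p \<tau> = (1 - \<tau>) *\<^sub>R x + \<tau> *\<^sub>R y" unfolding p_def by (simp add: algebra_simps)
    then show ?thesis using Q that by (simp add: convex_def)
  qed
  have dp: "(p has_derivative (\<lambda>h. h *\<^sub>R (y - x))) (at \<tau> within {0..1})" for \<tau>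
    unfolding p_def by (auto intro!: derivative_eq_intros)
  have "((f \<circ> p) has_derivative (D (p \<tau>) \<circ> (\<lambda>h. h *\<^sub>R (y - x)))) (at \<tau> within {0..1})"
    if "\<tau> \<in> {0..1}" for \<tau>
  proof (rule diff_chain_within[OF dp])
    have "p ` {0..1} \<subseteq> Q" using pQ by auto
    then show "(f has_derivative D (p \<tau>)) (at (p \<tau>) within p ` {0..1})"
      using df[OF pQ[OF that]] has_derivative_subset by blast
  qed
  then have "((\<lambda>\<tau>. f (p \<tau>)) has_derivative (\<lambda>h. D (p \<tau>) (h *\<^sub>R (y - x)))) (at \<tau> within {0..1})"
    if "\<tau> \<in> {0..1}" for \<tau> using that by (simp add: o_def)
  then have "\<exists>\<tau>\<in>{0..1}. f (p 1) - f (p 0) = D (p \<tau>) ((1 - 0) *\<^sub>R (y - x))"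
    by (intro mvt_very_simple) auto
  then show ?thesis unfolding p_def by auto
qed

lemma convex_mem_seg:
  assumes "convex C" "x \<in> C" "y \<in> C" "\<tau> \<in> {0..1::real}"
  shows "x + \<tau> *\<^sub>R (y - x) \<in> C"
proof -
  have "x + \<tau> *\<^sub>R (y - x) = (1 - \<tau>) *\<^sub>R x + \<tau> *\<^sub>R y" by (simp add: algebra_simps)
  then show ?thesis using assms by (simp add: convex_def)
qed

locale subl =
  fixes u :: "real^'m \<Rightarrow> real" and G :: "real^'m \<Rightarrow> real^'m"
    and H :: "real^'m \<Rightarrow> real^'m \<Rightarrow> real^'m" and \<kappa> :: real
  assumes m2: "CARD('m) \<ge> 2"
  and du: "\<And>x. x \<in> cbox 0 1 \<Longrightarrow> (u has_derivative (\<lambda>v. G x \<bullet> v)) (at x within cbox 0 1)"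
  and dG: "\<And>x. x \<in> cbox 0 1 \<Longrightarrow> (G has_derivative H x) (at x within cbox 0 1)"
  and Hb: "\<And>x. x \<in> cbox 0 1 \<Longrightarrow> onorm (H x) \<le> 1"
  and Gb: "\<And>x. x \<in> cbox 0 1 \<Longrightarrow> norm (G x) \<le> 1"
  and Hc: "continuous_on (cbox 0 1 \<times> sphere 0 1) (\<lambda>(x,\<xi>). H x \<xi> \<bullet> \<xi>)"
  and cond: "\<And>x \<xi>. x \<in> cbox 0 1 \<Longrightarrow> norm \<xi> = 1 \<Longrightarrow> \<kappa> \<le> \<bar>u x\<bar> + norm (G x) + \<bar>H x \<xi> \<bullet> \<xi>\<bar>"
  and kpos: "0 < \<kappa>" and kle: "\<kappa> \<le> 1"
begin

lemma ucont: "continuous_on (cbox 0 1) u"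
  by (rule has_derivative_continuous_on) (use du in blast)

lemma Gdiff:
  assumes "convex C" "C \<subseteq> cbox 0 1" "x \<in> C" "y \<in> C"
  shows "norm (G y - G x) \<le> norm (y - x)"
proof -
  have "norm (G y - G x) \<le> 1 * norm (y - x)"
  proof (rule differentiable_bound[OF assms(1) _ _ assms(4,3)])
    fix z assume "z \<in> C"
    then show "(G has_derivative H z) (at z within C)"
      using dG[of z] assms(2) has_derivative_subset by blast
    show "onorm (H z) \<le> 1" using Hb \<open>z \<in> C\<close> assms(2) by blast
  qed
  then show ?thesis by simp
qed

lemma udiff:
  assumes "convex C" "C \<subseteq> cbox 0 1" "x \<in> C" "y \<in> C" "\<And>z. z \<in> C \<Longrightarrow> norm (G z) \<le> g"
  shows "\<bar>u y - u x\<bar> \<le> g * norm (y - x)"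
proof -
  have "\<exists>\<tau>\<in>{0..1}. u y - u x = G (x + \<tau> *\<^sub>R (y - x)) \<bullet> (y - x)"
  proof (rule seg_mvt[OF assms(1,3,4)])
    fix z assume "z \<in> C"
    then show "(u has_derivative (\<lambda>v. G z \<bullet> v)) (at z within C)"
      using du[of z] assms(2) has_derivative_subset by blast
  qed
  then obtain \<tau> where t: "\<tau> \<in> {0..1}" and eq: "u y - u x = G (x + \<tau> *\<^sub>R (y - x)) \<bullet> (y - x)" by blast
  have zC: "x + \<tau> *\<^sub>R (y - x) \<in> C" by (rule convex_mem_seg[OF assms(1,3,4) t])
  have "\<bar>u y - u x\<bar> \<le> norm (G (x + \<tau> *\<^sub>R (y - x))) * norm (y - x)"
    unfolding eq by (rule Cauchy_Schwarz_ineq2)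
  also have "\<dots> \<le> g * norm (y - x)"
    by (rule mult_right_mono) (use assms(5)[OF zC] in auto)
  finally show ?thesis .
qed

lemma compact_sub:
  assumes "compact C" "C \<subseteq> cbox 0 1"
  shows "compact {y\<in>C. \<bar>u y\<bar> \<le> s}"
proof -
  have "continuous_on C (\<lambda>y. \<bar>u y\<bar>)"
    using ucont assms(2) continuous_on_subset continuous_on_rabs by blast
  then have "closed (C \<inter> (\<lambda>y. \<bar>u y\<bar>) -` {..s})"
    using assms(1) compact_imp_closed continuous_closed_preimage closed_atMost by blast
  moreover have "{y\<in>C. \<bar>u y\<bar> \<le> s} = C \<inter> (\<lambda>y. \<bar>u y\<bar>) -` {..s}" by auto
  moreover have "bounded {y\<in>C. \<bar>u y\<bar> \<le> s}"
    using assms(1) compact_imp_bounded bounded_subset by (metis (no_types, lifting) mem_Collect_eq subsetI)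
  ultimately show ?thesis using compact_eq_bounded_closed by metis
qed

lemma meas_sub:
  assumes "compact C" "C \<subseteq> cbox 0 1"
  shows "{y\<in>C. \<bar>u y\<bar> \<le> s} \<in> lmeasurable"
  using compact_sub[OF assms] lmeasurable_compact by blast

lemma TL_app:
  assumes C: "convex C" "compact C" "C \<subseteq> cbox 0 1"
    and box: "{y\<in>C. \<bar>u y\<bar> \<le> s} \<subseteq> cbox a b" "\<And>j. b$j - a$j = \<tau>" "\<tau> \<ge> 0"
    and c: "cc > 0" "\<And>y. y \<in> C \<Longrightarrow> cc \<le> \<bar>G y $ i\<bar>" and s: "s > 0"
  shows "measure lebesgue {y\<in>C. \<bar>u y\<bar> \<le> s} \<le> 3 * (2 * s / cc) * \<tau> ^ (CARD('m) - 1)"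
proof (rule TL_core[OF _ box(1,2,3)])
  show "{y\<in>C. \<bar>u y\<bar> \<le> s} \<in> sets lebesgue" using meas_sub[OF C(2,3)] by blast
  show "0 < 2 * s / cc" using c s by simp
  fix x t assume x: "x \<in> {y\<in>C. \<bar>u y\<bar> \<le> s}" and xt: "x + t *\<^sub>R axis i 1 \<in> {y\<in>C. \<bar>u y\<bar> \<le> s}"
  have "\<exists>\<tau>\<in>{0..1}. u (x + t *\<^sub>R axis i 1) - u x = G (x + \<tau> *\<^sub>R ((x + t *\<^sub>R axis i 1) - x)) \<bullet> ((x + t *\<^sub>R axis i 1) - x)"
  proof (rule seg_mvt[OF C(1)])
    show "x \<in> C" "x + t *\<^sub>R axis i 1 \<in> C" using x xt by auto
    fix z assume "z \<in> C"
    then show "(u has_derivative (\<lambda>v. G z \<bullet> v)) (at z within C)"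
      using du[of z] C(3) has_derivative_subset by blast
  qed
  then obtain \<tau> where t: "\<tau> \<in> {0..1}" and
    eq: "u (x + t *\<^sub>R axis i 1) - u x = G (x + \<tau> *\<^sub>R (t *\<^sub>R axis i 1)) \<bullet> (t *\<^sub>R axis i 1)" by auto
  have zC: "x + \<tau> *\<^sub>R ((x + t *\<^sub>R axis i 1) - x) \<in> C"
    by (rule convex_mem_seg[OF C(1) _ _ t]) (use x xt in auto)
  then have cz: "cc \<le> \<bar>G (x + \<tau> *\<^sub>R (t *\<^sub>R axis i 1)) $ i\<bar>" using c(2) by simp
  have "u (x + t *\<^sub>R axis i 1) - u x = t * (G (x + \<tau> *\<^sub>R (t *\<^sub>R axis i 1)) $ i)"
    unfolding eq by (simp add: cart_eq_inner_axis)
  then have "\<bar>t\<bar> * \<bar>G (x + \<tau> *\<^sub>R (t *\<^sub>R axis i 1)) $ i\<bar> \<le> 2 * s"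
  proof -
    assume e: "u (x + t *\<^sub>R axis i 1) - u x = t * (G (x + \<tau> *\<^sub>R (t *\<^sub>R axis i 1)) $ i)"
    have "\<bar>u (x + t *\<^sub>R axis i 1) - u x\<bar> \<le> 2 * s" using x xt by auto
    then show ?thesis unfolding abs_mult[symmetric] e[symmetric] .
  qed
  moreover have "\<bar>t\<bar> * cc \<le> \<bar>t\<bar> * \<bar>G (x + \<tau> *\<^sub>R (t *\<^sub>R axis i 1)) $ i\<bar>"
    using cz by (simp add: mult_left_mono)
  ultimately have "\<bar>t\<bar> * cc \<le> 2 * s" by linarith
  then show "\<bar>t\<bar> \<le> 2 * s / cc" using c by (simp add: field_simps)
qed

end

definition cube :: "real^'m \<Rightarrow> real \<Rightarrow> (real^'m) set" where
  "cube a L = cbox a (\<chi> j. a$j + L)"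

definition gridbox :: "real^'m \<Rightarrow> real \<Rightarrow> nat \<Rightarrow> ('m \<Rightarrow> nat) \<Rightarrow> (real^'m) set" where
  "gridbox a L n k = cube (\<chi> j. a$j + L / n * k j) (L / n)"

definition gridK :: "nat \<Rightarrow> ('m::finite \<Rightarrow> nat) set" where
  "gridK n = PiE UNIV (\<lambda>_. {..<n})"

lemma finite_gridK: "finite (gridK n)"
  unfolding gridK_def by (simp add: finite_PiE)

lemma card_gridK: "card (gridK n :: ('m::finite \<Rightarrow> nat) set) = n ^ CARD('m)"
  unfolding gridK_def by (simp add: card_PiE)

lemma mem_cube: "x \<in> cube a L \<longleftrightarrow> (\<forall>j. a$j \<le> x$j \<and> x$j \<le> a$j + L)"
  unfolding cube_def mem_box_cart by simp


lemma measure_cube: "L \<ge> 0 \<Longrightarrow> measure lebesgue (cube (a::real^'m) L) = L ^ CARD('m)"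
proof -
  assume L: "L \<ge> 0"
  have "a \<in> cube a L" using L by (simp add: mem_cube)
  then have "cbox a (\<chi> j. a$j + L) \<noteq> {}" unfolding cube_def by blast
  then show ?thesis unfolding cube_def by (simp add: content_cbox_cart)
qed

lemma grid_cover:
  assumes n: "n \<ge> 1" and L: "L > 0" and x: "x \<in> cube a L"
  shows "\<exists>k\<in>gridK n. x \<in> gridbox a L n k"
proof -
  define y where "y j = (x$j - a$j) * n / L" for j
  define k where "k j = (if j \<in> UNIV then min (n - 1) (nat \<lfloor>y j\<rfloor>) else undefined)" for j
  have k: "k j = min (n - 1) (nat \<lfloor>y j\<rfloor>)" for j unfolding k_def by simp
  have kK: "k \<in> gridK n" unfolding gridK_def k_def using n by auto
  have y0: "0 \<le> y j" for j using x L unfolding y_def mem_cube by simp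
  have yn: "y j \<le> n" for j
  proof -
    have "x$j - a$j \<le> L" using x unfolding mem_cube by (simp add: algebra_simps)
    then have "(x$j - a$j) * n \<le> L * n" by (simp add: mult_right_mono)
    then show ?thesis unfolding y_def using L by (simp add: field_simps)
  qed
  have lo: "real (k j) \<le> y j" for j
  proof -
    have "real (nat \<lfloor>y j\<rfloor>) \<le> y j" using y0[of j] by linarith
    then show ?thesis unfolding k by linarith
  qed
  have hi: "y j \<le> real (k j) + 1" for j
  proof (cases "nat \<lfloor>y j\<rfloor> \<le> n - 1")
    case True
    then have "k j = nat \<lfloor>y j\<rfloor>" unfolding k by simp
    then show ?thesis using y0[of j] by linarith
  next
    case False
    then have "k j = n - 1" unfolding k by simp
    then show ?thesis using yn[of j] n by simp
  qed
  have xj: "x$j = a$j + L / n * y j" for j unfolding y_def using L n by (simp add: field_simps)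
  have "x \<in> gridbox a L n k"
    unfolding gridbox_def mem_cube
  proof
    fix j
    have Ln: "L / n \<ge> 0" using L by simp
    have "L / n * k j \<le> L / n * y j" using lo[of j] Ln by (rule mult_left_mono)
    moreover have "L / n * y j \<le> L / n * k j + L / n"
      using hi[of j] Ln mult_left_mono[of "y j" "real (k j) + 1" "L/n"] by (simp add: algebra_simps)
    ultimately show "(\<chi> j. a $ j + L / real n * real (k j)) $ j \<le> x $ j \<and>
         x $ j \<le> (\<chi> j. a $ j + L / real n * real (k j)) $ j + L / real n"
      unfolding xj by simp
  qed
  then show ?thesis using kK by blast
qed

lemma gridbox_sub:
  assumes "k \<in> gridK n" "L \<ge> 0"
  shows "gridbox a L n k \<subseteq> cube a L"
proof
  fix x assume x: "x \<in> gridbox a L n k"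
  show "x \<in> cube a L" unfolding mem_cube
  proof
    fix j
    have kj: "k j < n" using assms(1) unfolding gridK_def by auto
    then have "real (k j) + 1 \<le> real n" by simp
    then have "L / n * (real (k j) + 1) \<le> L / n * n"
      using assms(2) by (intro mult_left_mono) auto
    also have "\<dots> = L" using kj by simp
    finally have "L / n * k j + L / n \<le> L" by (simp add: algebra_simps)
    moreover have "0 \<le> L / n * k j" using assms(2) by simp
    moreover have "a $ j + L / n * k j \<le> x $ j" "x $ j \<le> a $ j + L / n * k j + L / n"
      using x unfolding gridbox_def mem_cube by auto
    ultimately show "a $ j \<le> x $ j \<and> x $ j \<le> a $ j + L" by linarith
  qed
qed

lemma grid_bound:
  fixes S :: "(real^'m) set"
  assumes S: "S \<in> sets lebesgue" "S \<subseteq> cube a L" and n: "n \<ge> 1" and L: "L > 0"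
    and bnd: "\<And>k. k \<in> gridK n \<Longrightarrow> measure lebesgue (S \<inter> gridbox a L n k) \<le> M"
  shows "measure lebesgue S \<le> real n ^ CARD('m) * M"
proof -
  have sub: "S \<subseteq> (\<Union>k\<in>gridK n. S \<inter> gridbox a L n k)"
    using grid_cover[OF n L] S(2) by blast
  have gm: "gridbox a L n k \<in> sets lebesgue" for k
    unfolding gridbox_def cube_def by simp
  have "measure lebesgue S \<le> measure lebesgue (\<Union>k\<in>gridK n. S \<inter> gridbox a L n k)"
  proof (rule measure_mono_fmeasurable[OF sub S(1)])
    have "(\<Union>k\<in>gridK n. S \<inter> gridbox a L n k) \<subseteq> cube a L" using S(2) by blast
    moreover have "(\<Union>k\<in>gridK n. S \<inter> gridbox a L n k) \<in> sets lebesgue"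
      using S(1) gm finite_gridK by (intro sets.finite_UN) auto
    ultimately show "(\<Union>k\<in>gridK n. S \<inter> gridbox a L n k) \<in> fmeasurable lebesgue"
      using fmeasurableI2[OF lmeasurable_cbox] unfolding cube_def by blast
  qed
  also have "\<dots> \<le> (\<Sum>k\<in>gridK n. measure lebesgue (S \<inter> gridbox a L n k))"
    by (rule measure_UNION_le[OF finite_gridK]) (use S(1) gm in auto)
  also have "\<dots> \<le> (\<Sum>k\<in>(gridK n :: ('m \<Rightarrow> nat) set). M)" using bnd by (intro sum_mono) auto
  also have "\<dots> = real n ^ CARD('m) * M" by (simp add: card_gridK)
  finally show ?thesis .
qed

lemma exists_big_comp: "\<exists>i. norm (x::real^'m) \<le> real CARD('m) * \<bar>x$i\<bar>"
proof -
  have "Max (range (\<lambda>j. \<bar>x$j\<bar>)) \<in> range (\<lambda>j. \<bar>x$j\<bar>)"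
    by (rule Max_in) auto
  then obtain i where i0: "Max (range (\<lambda>j. \<bar>x$j\<bar>)) = \<bar>x$i\<bar>" by blast
  note i = i0[symmetric]
  have "norm x \<le> (\<Sum>j\<in>UNIV. \<bar>x$j\<bar>)" by (rule norm_le_l1_cart)
  also have "\<dots> \<le> of_nat (card (UNIV::'m set)) * \<bar>x$i\<bar>"
    by (rule sum_bounded_above) (simp add: i)
  finally show ?thesis by auto
qed

lemma norm_diff_cube:
  fixes x y :: "real^'m"
  assumes "x \<in> cube a \<tau>" "y \<in> cube a \<tau>"
  shows "norm (y - x) \<le> real CARD('m) * \<tau>"
proof -
  have "norm (y - x) \<le> (\<Sum>j\<in>UNIV. \<bar>(y - x)$j\<bar>)" by (rule norm_le_l1_cart)
  also have "\<dots> \<le> of_nat (card (UNIV::'m set)) * \<tau>"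
  proof (rule sum_bounded_above)
    fix j
    have "a$j \<le> x$j" "x$j \<le> a$j+\<tau>" "a$j \<le> y$j" "y$j \<le> a$j + \<tau>"
      using assms unfolding mem_cube by auto
    moreover have "(y - x)$j = y$j - x$j" by simp
    ultimately show "\<bar>(y - x)$j\<bar> \<le> \<tau>" unfolding abs_le_iff by linarith
  qed
  finally show ?thesis by simp
qed

lemma quad_lower:
  assumes L: "bounded_linear L" and b: "\<And>\<xi>. norm \<xi> = 1 \<Longrightarrow> \<beta> \<le> L \<xi> \<bullet> \<xi>"
  shows "\<beta> * (norm d)^2 \<le> L d \<bullet> (d::'a::real_inner)"
proof (cases "d = 0")
  case True
  then show ?thesis using L by (simp add: linear_simps)
next
  case False
  define \<xi> where "\<xi> = (1 / norm d) *\<^sub>R d"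
  have n: "norm \<xi> = 1" unfolding \<xi>_def using False by simp
  have "L \<xi> \<bullet> \<xi> = (1 / norm d)^2 * (L d \<bullet> d)"
    unfolding \<xi>_def using L by (simp add: linear_simps power2_eq_square)
  with b[OF n] have "\<beta> \<le> (1 / norm d)^2 * (L d \<bullet> d)" by simp
  then have "\<beta> * (norm d)^2 \<le> (1 / norm d)^2 * (L d \<bullet> d) * (norm d)^2"
    by (simp add: mult_right_mono)
  also have "\<dots> = L d \<bullet> d" using False by (simp add: field_simps)
  finally show ?thesis .
qed

lemma in_cube_near:
  assumes "norm (y - x) \<le> r"
  shows "(y::real^'m) \<in> cube (\<chi> i. x$i - r) (2*r)"
  unfolding mem_cube
proof
  fix i
  have "\<bar>(y - x)$i\<bar> \<le> r" using component_le_norm_cart[of "y - x" i] assms by linarith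
  then show "(\<chi> i. x $ i - r) $ i \<le> y $ i \<and> y $ i \<le> (\<chi> i. x $ i - r) $ i + 2 * r" by auto
qed

lemma cube_convex: "convex (cube a L)" unfolding cube_def by (rule convex_box)
lemma cube_compact: "compact (cube a L)" unfolding cube_def by (rule compact_cbox)

context subl begin

lemma grad_lower:
  assumes Q: "convex Q" "compact Q" "Q \<subseteq> cbox 0 1" and xs: "xs \<in> Q" "\<forall>y\<in>Q. u xs \<le> u y"
    and \<beta>: "0 < \<beta>" "\<And>y \<xi>. y \<in> Q \<Longrightarrow> norm \<xi> = 1 \<Longrightarrow> \<beta> \<le> H y \<xi> \<bullet> \<xi>"
    and y: "y \<in> Q"
  shows "norm (y - xs) \<le> 2 * norm (G y) / \<beta>"
proof -
  define d where "d = y - xs"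
  define p where "p = xs + (1/2) *\<^sub>R (y - xs)"
  have pQ: "p \<in> Q" unfolding p_def by (rule convex_mem_seg[OF Q(1) xs(1) y]) auto
  have "\<exists>\<tau>\<in>{0..1}. u p - u xs = G (xs + \<tau> *\<^sub>R (p - xs)) \<bullet> (p - xs)"
  proof (rule seg_mvt[OF Q(1) xs(1) pQ])
    fix z assume "z \<in> Q"
    then show "(u has_derivative (\<lambda>v. G z \<bullet> v)) (at z within Q)"
      using du[of z] Q(3) has_derivative_subset by blast
  qed
  then obtain \<tau>1 where t1: "\<tau>1 \<in> {0..1}" and e1: "u p - u xs = G (xs + \<tau>1 *\<^sub>R (p - xs)) \<bullet> (p - xs)"
    by blast
  define z1 where "z1 = xs + \<tau>1 *\<^sub>R (p - xs)"
  have z1Q: "z1 \<in> Q" unfolding z1_def by (rule convex_mem_seg[OF Q(1) xs(1) pQ t1])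
  have pd: "p - xs = (1/2) *\<^sub>R d" unfolding p_def d_def by simp
  have "0 \<le> u p - u xs" using xs(2) pQ by auto
  moreover have "u p - u xs = G z1 \<bullet> ((1/2) *\<^sub>R d)" using e1 unfolding z1_def pd .
  ultimately have "0 \<le> (1/2) * (G z1 \<bullet> d)" by simp
  then have g1: "0 \<le> G z1 \<bullet> d" by simp
  have "\<exists>\<tau>\<in>{0..1}. G y \<bullet> d - G z1 \<bullet> d = H (z1 + \<tau> *\<^sub>R (y - z1)) (y - z1) \<bullet> d"
  proof (rule seg_mvt[OF Q(1) z1Q y, where f = "\<lambda>z. G z \<bullet> d"])
    fix z assume "z \<in> Q"
    then have "(G has_derivative H z) (at z within Q)"
      using dG[of z] Q(3) has_derivative_subset by blast
    then show "((\<lambda>z. G z \<bullet> d) has_derivative (\<lambda>v. H z v \<bullet> d)) (at z within Q)"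
      by (rule has_derivative_inner_left)
  qed
  then obtain \<tau>2 where t2: "\<tau>2 \<in> {0..1}" and e2: "G y \<bullet> d - G z1 \<bullet> d = H (z1 + \<tau>2 *\<^sub>R (y - z1)) (y - z1) \<bullet> d"
    by blast
  define z2 where "z2 = z1 + \<tau>2 *\<^sub>R (y - z1)"
  have z2Q: "z2 \<in> Q" unfolding z2_def by (rule convex_mem_seg[OF Q(1) z1Q y t2])
  have lin: "bounded_linear (H z2)" using dG[of z2] Q(3) z2Q has_derivative_bounded_linear by blast
  have yz1: "y - z1 = (1 - \<tau>1/2) *\<^sub>R d" unfolding z1_def pd d_def by (simp add: algebra_simps)
  have "H z2 (y - z1) \<bullet> d = (1 - \<tau>1/2) * (H z2 d \<bullet> d)"
    unfolding yz1 using lin by (simp add: linear_simps)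
  moreover have q: "\<beta> * (norm d)^2 \<le> H z2 d \<bullet> d"
    by (rule quad_lower[OF lin]) (use \<beta>(2) z2Q in blast)
  moreover have h12: "1/2 \<le> 1 - \<tau>1/2" using t1 by auto
  moreover have b0: "0 \<le> \<beta> * (norm d)^2" using \<beta> by simp
  moreover have "(1/2) * (\<beta> * (norm d)^2) \<le> (1 - \<tau>1/2) * (\<beta> * (norm d)^2)"
    using h12 b0 by (rule mult_right_mono)
  moreover have "(1 - \<tau>1/2) * (\<beta> * (norm d)^2) \<le> (1 - \<tau>1/2) * (H z2 d \<bullet> d)"
    using q h12 by (intro mult_left_mono) auto
  ultimately have "(1/2) * (\<beta> * (norm d)^2) \<le> H z2 (y - z1) \<bullet> d" by linarith
  then have "(1/2) * (\<beta> * (norm d)^2) \<le> G y \<bullet> d" using e2 g1 unfolding z2_def by linarith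
  also have "\<dots> \<le> norm (G y) * norm d" by (rule Cauchy_Schwarz_ineq2[THEN order_trans[OF abs_ge_self]])
  finally have "(1/2) * \<beta> * norm d * norm d \<le> norm (G y) * norm d" by (simp add: power2_eq_square algebra_simps)
  then have "(1/2) * \<beta> * norm d \<le> norm (G y)" if "norm d > 0" using that by simp
  then have "norm d \<le> 2 * norm (G y) / \<beta>" using \<beta>(1)
    by (cases "norm d > 0") (auto simp: field_simps)
  then show ?thesis unfolding d_def .
qed

end

context subl begin

lemma SC:
  assumes Q: "Q \<subseteq> cbox 0 1" "Q = cube q \<sigma>" "0 \<le> \<sigma>"
    and \<beta>: "0 < \<beta>" "\<And>y \<xi>. y \<in> Q \<Longrightarrow> norm \<xi> = 1 \<Longrightarrow> \<beta> \<le> H y \<xi> \<bullet> \<xi>"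
    and s: "0 < s" "s \<le> 1"
  shows "measure lebesgue {y\<in>Q. \<bar>u y\<bar> \<le> s} \<le> (4 * s / \<beta>) ^ CARD('m)
     + real (nat \<lceil>log 2 (1 / s)\<rceil>) * real (nat \<lceil>16 * real CARD('m)^2 / \<beta>\<rceil>) ^ CARD('m) * (6 * s)"
proof -
  define mm where "mm = real CARD('m)"
  have mm2: "mm \<ge> 2" unfolding mm_def using m2 by simp
  define S where "S = {y\<in>Q. \<bar>u y\<bar> \<le> s}"
  have Qc: "convex Q" "compact Q" unfolding Q(2) by (rule cube_convex, rule cube_compact)
  have qQ: "q \<in> Q" unfolding Q(2) mem_cube using Q(3) by simp
  have Sm: "S \<in> lmeasurable" unfolding S_def by (rule meas_sub[OF Qc(2) Q(1)])
  obtain xs where xs: "xs \<in> Q" "\<forall>y\<in>Q. u xs \<le> u y"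
    using continuous_attains_inf[OF Qc(2) _ continuous_on_subset[OF ucont Q(1)]] qQ by blast
  have GL: "norm (y - xs) \<le> 2 * norm (G y) / \<beta>" if "y \<in> Q" for y
    by (rule grad_lower[OF Qc Q(1) xs \<beta> that])
  define J where "J = nat \<lceil>log 2 (1 / s)\<rceil>"
  define n where "n = nat \<lceil>16 * mm^2 / \<beta>\<rceil>"
  have nbig: "16 * mm^2 / \<beta> \<le> real n" unfolding n_def by linarith
  have n1: "n \<ge> 1"
  proof -
    have "0 < 16 * mm^2 / \<beta>" using mm2 \<beta>(1) by simp
    then show ?thesis using nbig by linarith
  qed
  have logpos: "0 \<le> log 2 (1 / s)" using s by simp
  have J1: "1 \<le> 2^J * s"
  proof -
    have "log 2 (1 / s) \<le> real J" unfolding J_def by linarith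
    then have "2 powr (log 2 (1 / s)) \<le> 2 powr (real J)" by simp
    then have "1 / s \<le> 2^J" using s by (simp add: powr_realpow)
    then show ?thesis using s by (simp add: field_simps)
  qed
  have J2: "2^J * s \<le> 2"
  proof -
    have "real J \<le> log 2 (1 / s) + 1" unfolding J_def using logpos by linarith
    then have "2 powr (real J) \<le> 2 powr (log 2 (1 / s) + 1)" by simp
    then have "2^J \<le> 2 / s" using s by (simp add: powr_realpow powr_add)
    then show ?thesis using s by (simp add: field_simps)
  qed
  define lam where "lam j = 2^j * s" for j :: nat
  define rho where "rho j = 2 * lam j / \<beta>" for j
  define a where "a j = (\<chi> i. xs$i - rho j)" for j
  define P where "P j k = gridbox (a j) (2 * rho j) n k" for j k
  define B0 where "B0 = cube (\<chi> i. xs$i - 2 * s / \<beta>) (2 * (2 * s / \<beta>))"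
  define I where "I j = {k\<in>gridK n. \<exists>y1\<in>S \<inter> P j k. lam j / 2 \<le> norm (G y1)}" for j
  define IJ where "IJ = Sigma {1..J} I"
  have lampos: "0 < lam j" for j unfolding lam_def using s by simp
  have rhopos: "0 < rho j" for j unfolding rho_def using lampos \<beta> by simp
  have IJsub: "IJ \<subseteq> {1..J} \<times> gridK n" unfolding IJ_def I_def by auto
  have IJfin: "finite IJ" using IJsub finite_gridK finite_subset by blast
  have cardIJ: "real (card IJ) \<le> real J * real n ^ CARD('m)"
  proof -
    have "card IJ \<le> card ({1..J} \<times> (gridK n :: ('m \<Rightarrow> nat) set))"
      by (rule card_mono) (use IJsub finite_gridK in auto)
    also have "\<dots> = J * n ^ CARD('m)" by (simp add: card_cartesian_product card_gridK)
    finally show ?thesis by (metis of_nat_le_iff of_nat_mult of_nat_power)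
  qed
  have Pm: "P j k \<in> sets lebesgue" for j k unfolding P_def gridbox_def cube_def by simp
  have B0m: "B0 \<in> lmeasurable" unfolding B0_def cube_def by simp
  have cover: "S \<subseteq> (S \<inter> B0) \<union> (\<Union>p\<in>IJ. S \<inter> P (fst p) (snd p))"
  proof
    fix y assume yS: "y \<in> S"
    then have yQ: "y \<in> Q" unfolding S_def by simp
    show "y \<in> (S \<inter> B0) \<union> (\<Union>p\<in>IJ. S \<inter> P (fst p) (snd p))"
    proof (cases "norm (G y) \<le> s")
      case True
      have "2 * norm (G y) / \<beta> \<le> 2 * s / \<beta>" using True \<beta>(1) by (simp add: divide_right_mono)
      then have "norm (y - xs) \<le> 2 * s / \<beta>" using GL[OF yQ] by linarith
      then have "y \<in> B0" unfolding B0_def by (rule in_cube_near)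
      then show ?thesis using yS by blast
    next
      case False
      have ex: "\<exists>j. norm (G y) \<le> 2^j * s" using Gb[of y] Q(1) yQ J1 by (meson order_trans subsetD)
      define j where "j = (LEAST j. norm (G y) \<le> 2^j * s)"
      have jle: "norm (G y) \<le> 2^j * s" unfolding j_def by (rule LeastI_ex[OF ex])
      have jJ: "j \<le> J" unfolding j_def
        by (rule Least_le) (use Gb[of y] Q(1) yQ J1 in auto)
      have j0: "j \<noteq> 0" using jle False by (cases j) auto
      have "\<not> norm (G y) \<le> 2^(j-1) * s" unfolding j_def
        by (rule not_less_Least) (use j0 in \<open>simp add: j_def\<close>)
      then have jlo: "lam j / 2 < norm (G y)"
      proof -
        assume "\<not> norm (G y) \<le> 2^(j-1) * s"
        moreover have "(2::real)^j = 2 * 2^(j-1)" using j0 by (cases j) auto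
        ultimately show ?thesis unfolding lam_def by simp
      qed
      have "norm (y - xs) \<le> 2 * norm (G y) / \<beta>" by (rule GL[OF yQ])
      also have "\<dots> \<le> rho j" unfolding rho_def lam_def using jle \<beta>(1)
        by (simp add: divide_right_mono)
      finally have "y \<in> cube (a j) (2 * rho j)" unfolding a_def by (rule in_cube_near)
      then obtain k where kK: "k \<in> gridK n" and yP: "y \<in> P j k"
        using grid_cover[OF n1, of "2 * rho j" y "a j"] rhopos[of j] unfolding P_def by auto
      have "\<exists>y1\<in>S \<inter> P j k. lam j / 2 \<le> norm (G y1)"
        using yS yP jlo by (intro bexI[of _ y]) auto
      then have "k \<in> I j" unfolding I_def using kK by blast
      then have "(j, k) \<in> IJ" unfolding IJ_def using j0 jJ by auto
      then show ?thesis using yS yP by force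
    qed
  qed
  have perbox: "measure lebesgue (S \<inter> P j k) \<le> 6 * s" if jk: "(j, k) \<in> IJ" for j k
  proof -
    from jk have jJ: "j \<in> {1..J}" and kI: "k \<in> I j" unfolding IJ_def by auto
    then obtain y1 where y1: "y1 \<in> S" "y1 \<in> P j k" and g1: "lam j / 2 \<le> norm (G y1)"
      unfolding I_def by auto
    obtain i where i: "norm (G y1) \<le> mm * \<bar>G y1 $ i\<bar>"
      using exists_big_comp[of "G y1"] unfolding mm_def by blast
    define \<tau> where "\<tau> = 2 * rho j / n"
    have Pc: "P j k = cube (\<chi> i. a j $ i + 2 * rho j / n * k i) \<tau>"
      unfolding P_def gridbox_def \<tau>_def by simp
    have tau0: "0 \<le> \<tau>" unfolding \<tau>_def using rhopos[of j] by simp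
    have lamJ: "lam j \<le> 2"
    proof -
      have "lam j \<le> lam J" unfolding lam_def using jJ s by (simp add: mult_right_mono)
      then show ?thesis using J2 unfolding lam_def by simp
    qed
    have tau_le: "\<tau> \<le> lam j / (4 * mm^2)"
    proof -
      have "\<tau> = 4 * lam j / (\<beta> * n)" unfolding \<tau>_def rho_def by simp
      also have "\<dots> \<le> 4 * lam j / (16 * mm^2)"
      proof (rule divide_left_mono)
        show "16 * mm^2 \<le> \<beta> * real n" using nbig \<beta>(1) by (simp add: pos_divide_le_eq mult.commute)
        show "0 \<le> 4 * lam j" using lampos[of j] by simp
        show "0 < \<beta> * real n * (16 * mm^2)" using \<beta>(1) n1 mm2 by simp
      qed
      also have "\<dots> = lam j / (4 * mm^2)" by simp
      finally show ?thesis .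
    qed
    have tau1: "\<tau> \<le> 1"
    proof -
      have m4: "4 \<le> mm^2" using power_mono[OF mm2, of 2] by simp
      have "lam j / (4 * mm^2) \<le> 2 / (4 * 2^2)"
        by (rule frac_le) (use lamJ lampos[of j] m4 in auto)
      then show ?thesis using tau_le by simp
    qed
    define C where "C = Q \<inter> P j k"
    have Cc1: "convex C" "C \<subseteq> cbox 0 1"
      unfolding C_def Pc using Qc(1) Q(1) cube_convex by (auto intro: convex_Int)
    have Cc2: "compact C" unfolding C_def Pc by (rule compact_Int[OF Qc(2) cube_compact])
    note Cc = Cc1(1) Cc2 Cc1(2)
    have SC_eq: "S \<inter> P j k = {y\<in>C. \<bar>u y\<bar> \<le> s}" unfolding S_def C_def by auto
    have y1C: "y1 \<in> C" using y1 unfolding C_def S_def by auto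
    have cpos: "0 < lam j / (4 * mm)" using lampos[of j] mm2 by simp
    have cbound: "lam j / (4 * mm) \<le> \<bar>G y $ i\<bar>" if yC: "y \<in> C" for y
    proof -
      have "norm (G y - G y1) \<le> norm (y - y1)" by (rule Gdiff[OF Cc(1) Cc(3) y1C yC])
      also have "\<dots> \<le> mm * \<tau>" unfolding mm_def
        by (rule norm_diff_cube) (use y1 yC in \<open>auto simp: C_def Pc\<close>)
      also have "\<dots> \<le> mm * (lam j / (4 * mm^2))" using tau_le mm2 by (intro mult_left_mono) auto
      also have "\<dots> = lam j / (4 * mm)" using mm2 by (simp add: power2_eq_square)
      finally have d1: "\<bar>(G y - G y1) $ i\<bar> \<le> lam j / (4 * mm)"
        using component_le_norm_cart[of "G y - G y1" i] by linarith
      have "lam j / 2 \<le> mm * \<bar>G y1 $ i\<bar>" using g1 i by linarith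
      then have d2: "lam j / (2 * mm) \<le> \<bar>G y1 $ i\<bar>" using mm2 by (simp add: pos_divide_le_eq algebra_simps)
      have d3: "lam j / (2 * mm) = 2 * (lam j / (4 * mm))" by simp
      have d4: "\<bar>G y1 $ i\<bar> - \<bar>G y $ i\<bar> \<le> \<bar>(G y - G y1) $ i\<bar>"
        using abs_triangle_ineq2[of "G y1 $ i" "G y $ i"] by (simp add: abs_minus_commute)
      from d1 d2 d3 d4 show ?thesis by linarith
    qed
    have "measure lebesgue {y\<in>C. \<bar>u y\<bar> \<le> s} \<le> 3 * (2 * s / (lam j / (4 * mm))) * \<tau> ^ (CARD('m) - 1)"
    proof (rule TL_app[OF Cc _ _ tau0 cpos cbound s(1)])
      show "{y\<in>C. \<bar>u y\<bar> \<le> s} \<subseteq> cbox (\<chi> i. a j $ i + 2 * rho j / n * k i) (\<chi> ia. (\<chi> i. a j $ i + 2 * rho j / n * k i) $ ia + \<tau>)"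
        unfolding C_def Pc cube_def by auto
      show "\<And>ja. (\<chi> ia. (\<chi> i. a j $ i + 2 * rho j / n * k i) $ ia + \<tau>) $ ja - (\<chi> i. a j $ i + 2 * rho j / n * k i) $ ja = \<tau>"
        by simp
    qed
    also have "\<dots> \<le> 3 * (2 * s / (lam j / (4 * mm))) * \<tau>"
    proof (rule mult_left_mono)
      have "CARD('m) - 1 = Suc (CARD('m) - 2)" using m2 by simp
      then have "\<tau> ^ (CARD('m) - 1) = \<tau> * \<tau> ^ (CARD('m) - 2)" by simp
      also have "\<dots> \<le> \<tau> * 1" using tau0 tau1 by (intro mult_left_mono power_le_one) auto
      finally show "\<tau> ^ (CARD('m) - 1) \<le> \<tau>" by simp
      show "0 \<le> 3 * (2 * s / (lam j / (4 * mm)))" by (intro mult_nonneg_nonneg divide_nonneg_pos) (use s cpos in auto)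
    qed
    also have "\<dots> \<le> 3 * (2 * s / (lam j / (4 * mm))) * (lam j / (4 * mm^2))"
      by (rule mult_left_mono[OF tau_le]) (intro mult_nonneg_nonneg divide_nonneg_pos, use s cpos in auto)
    also have "\<dots> = 6 * s / mm"
    proof -
      have "lam j \<noteq> 0" "mm \<noteq> 0" using lampos[of j] mm2 by auto
      then show ?thesis by (simp add: field_simps power2_eq_square)
    qed
    also have "\<dots> \<le> 6 * s / 1" by (rule divide_left_mono) (use mm2 s in auto)
    finally show ?thesis unfolding SC_eq by simp
  qed
  have US: "(S \<inter> B0) \<union> (\<Union>p\<in>IJ. S \<inter> P (fst p) (snd p)) = S" using cover by blast
  have "measure lebesgue S \<le> measure lebesgue (S \<inter> B0) + measure lebesgue (\<Union>p\<in>IJ. S \<inter> P (fst p) (snd p))"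
    by (subst US[symmetric], rule measure_Un_le) (use Sm B0m Pm IJfin in auto)
  also have "measure lebesgue (S \<inter> B0) \<le> measure lebesgue B0"
    by (rule measure_mono_fmeasurable) (use Sm B0m in auto)
  also have "measure lebesgue B0 = (4 * s / \<beta>) ^ CARD('m)"
    unfolding B0_def by (subst measure_cube) (use s \<beta> in auto)
  also have "measure lebesgue (\<Union>p\<in>IJ. S \<inter> P (fst p) (snd p)) \<le> (\<Sum>p\<in>IJ. measure lebesgue (S \<inter> P (fst p) (snd p)))"
    by (rule measure_UNION_le[OF IJfin]) (use Sm Pm in auto)
  also have "\<dots> \<le> (\<Sum>p\<in>IJ. 6 * s)" by (rule sum_mono) (use perbox in auto)
  also have "\<dots> = real (card IJ) * (6 * s)" by simp
  also have "\<dots> \<le> real J * real n ^ CARD('m) * (6 * s)"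
    by (rule mult_right_mono[OF cardIJ]) (use s in simp)
  finally show ?thesis unfolding S_def J_def n_def mm_def by simp
qed

end

lemma sign_const:
  fixes f :: "'a::topological_space \<Rightarrow> real"
  assumes "connected T" "continuous_on T f" "\<And>x. x \<in> T \<Longrightarrow> b \<le> \<bar>f x\<bar>" "b > 0"
  shows "(\<forall>x\<in>T. b \<le> f x) \<or> (\<forall>x\<in>T. b \<le> - f x)"
proof (rule ccontr)
  assume "\<not> ?thesis"
  then obtain x1 x2 where x: "x1 \<in> T" "x2 \<in> T" "f x1 < b" "- f x2 < b" by force
  then have "f x1 \<le> 0" "0 \<le> f x2" using assms(3)[of x1] assms(3)[of x2] by (auto simp: abs_if split: if_splits)
  moreover have "connected (f ` T)" by (rule connected_continuous_image[OF assms(2,1)])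
  ultimately have "0 \<in> f ` T" using x connectedD_interval by (metis imageI)
  then obtain x where "x \<in> T" "f x = 0" by auto
  then show False using assms(3)[of x] assms(4) by simp
qed

definition Asub :: "nat \<Rightarrow> real \<Rightarrow> real" where
  "Asub m \<kappa> = real (nat \<lceil>8 * real m ^ 2 / \<kappa>\<rceil>) ^ m *
     (48 * real m / \<kappa> + (16 / \<kappa>) ^ m + 6 * real (nat \<lceil>64 * real m ^ 2 / \<kappa>\<rceil>) ^ m)"

context subl begin

lemma SC_any:
  assumes Q: "Q \<subseteq> cbox 0 1" "Q = cube q \<sigma>" "0 \<le> \<sigma>"
    and \<beta>: "0 < \<beta>"
    and sgn: "(\<forall>y\<in>Q. \<forall>\<xi>. norm \<xi> = 1 \<longrightarrow> \<beta> \<le> H y \<xi> \<bullet> \<xi>) \<or> (\<forall>y\<in>Q. \<forall>\<xi>. norm \<xi> = 1 \<longrightarrow> \<beta> \<le> - (H y \<xi> \<bullet> \<xi>))"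
    and s: "0 < s" "s \<le> 1"
  shows "measure lebesgue {y\<in>Q. \<bar>u y\<bar> \<le> s} \<le> (4 * s / \<beta>) ^ CARD('m)
     + real (nat \<lceil>log 2 (1 / s)\<rceil>) * real (nat \<lceil>16 * real CARD('m)^2 / \<beta>\<rceil>) ^ CARD('m) * (6 * s)"
  using sgn
proof
  assume "\<forall>y\<in>Q. \<forall>\<xi>. norm \<xi> = 1 \<longrightarrow> \<beta> \<le> H y \<xi> \<bullet> \<xi>"
  then show ?thesis using SC[OF Q \<beta>] s by blast
next
  assume neg: "\<forall>y\<in>Q. \<forall>\<xi>. norm \<xi> = 1 \<longrightarrow> \<beta> \<le> - (H y \<xi> \<bullet> \<xi>)"
  interpret N: subl "\<lambda>x. - u x" "\<lambda>x. - G x" "\<lambda>x v. - H x v" \<kappa>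
  proof
    show "CARD('m) \<ge> 2" by (rule m2)
    fix x assume x: "x \<in> cbox (0::real^'m) 1"
    show "((\<lambda>x. - u x) has_derivative (\<lambda>v. - G x \<bullet> v)) (at x within cbox 0 1)"
      using has_derivative_minus[OF du[OF x]] by simp
    show "((\<lambda>x. - G x) has_derivative (\<lambda>v. - H x v)) (at x within cbox 0 1)"
      using has_derivative_minus[OF dG[OF x]] by simp
    show "onorm (\<lambda>v. - H x v) \<le> 1" using Hb[OF x] by (simp add: onorm_neg)
    show "norm (- G x) \<le> 1" using Gb[OF x] by simp
    fix \<xi> :: "real^'m" assume "norm \<xi> = 1"
    then show "\<kappa> \<le> \<bar>- u x\<bar> + norm (- G x) + \<bar>- H x \<xi> \<bullet> \<xi>\<bar>" using cond[OF x] by simp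
  next
    show "continuous_on (cbox 0 1 \<times> sphere 0 1) (\<lambda>(x, \<xi>). - H x \<xi> \<bullet> \<xi>)"
      using continuous_on_minus[OF Hc] by (simp add: case_prod_unfold)
  qed (use kpos kle in auto)
  have "measure lebesgue {y\<in>Q. \<bar>- u y\<bar> \<le> s} \<le> (4 * s / \<beta>) ^ CARD('m)
     + real (nat \<lceil>log 2 (1 / s)\<rceil>) * real (nat \<lceil>16 * real CARD('m)^2 / \<beta>\<rceil>) ^ CARD('m) * (6 * s)"
    by (rule N.SC[OF Q \<beta>]) (use neg s in auto)
  then show ?thesis by simp
qed

end

lemma cube01: "cube (0::real^'m) 1 = cbox 0 1"
proof -
  have "(\<chi> j. (0::real^'m)$j + 1) = 1" by (simp add: vec_eq_iff)
  then show ?thesis unfolding cube_def by simp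
qed

context subl begin

lemma SUB:
  assumes s: "0 < s" "s \<le> 1"
  shows "measure lebesgue {x\<in>cbox 0 1. \<bar>u x\<bar> \<le> s} \<le> Asub CARD('m) \<kappa> * s * (1 + log 2 (1 / s))"
proof -
  define mm where "mm = real CARD('m)"
  have mm2: "mm \<ge> 2" unfolding mm_def using m2 by simp
  define N where "N = nat \<lceil>8 * mm^2 / \<kappa>\<rceil>"
  define n where "n = nat \<lceil>64 * mm^2 / \<kappa>\<rceil>"
  define \<sigma> where "\<sigma> = 1 / real N"
  define B where "B = 48 * mm / \<kappa> + (16 / \<kappa>) ^ CARD('m) + 6 * real n ^ CARD('m)"
  define ell where "ell = 1 + log 2 (1 / s)"
  have Aeq: "Asub CARD('m) \<kappa> = real N ^ CARD('m) * B"
    unfolding Asub_def N_def n_def B_def mm_def by simp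
  have logpos: "0 \<le> log 2 (1 / s)" using s by simp
  have l1: "1 \<le> ell" unfolding ell_def using logpos by simp
  have Nbig: "8 * mm^2 / \<kappa> \<le> real N" unfolding N_def by linarith
  have N1: "N \<ge> 1"
  proof -
    have "0 < 8 * mm^2 / \<kappa>" using mm2 kpos by simp
    then show ?thesis using Nbig by linarith
  qed
  have sig0: "0 < \<sigma>" unfolding \<sigma>_def using N1 by simp
  have sig_le: "\<sigma> \<le> \<kappa> / (8 * mm^2)"
  proof -
    have "\<sigma> = 1 / real N" by (rule \<sigma>_def)
    also have "\<dots> \<le> 1 / (8 * mm^2 / \<kappa>)"
      by (rule divide_left_mono[OF Nbig]) (use mm2 kpos N1 in auto)
    also have "\<dots> = \<kappa> / (8 * mm^2)" by simp
    finally show ?thesis .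
  qed
  have m4: "4 \<le> mm^2" using power_mono[OF mm2, of 2] by simp
  have msig: "mm * \<sigma> \<le> \<kappa> / (8 * mm)"
  proof -
    have "mm * \<sigma> \<le> mm * (\<kappa> / (8 * mm^2))" using sig_le mm2 by (intro mult_left_mono) auto
    also have "\<dots> = \<kappa> / (8 * mm)" using mm2 by (simp add: power2_eq_square)
    finally show ?thesis .
  qed
  have msig1: "mm * \<sigma> \<le> 1"
  proof -
    have "\<kappa> / (8 * mm) \<le> 1 / (8 * 2)" by (rule frac_le) (use kpos kle mm2 in auto)
    then show ?thesis using msig by simp
  qed
  have sig1: "\<sigma> \<le> 1" using msig1 mm2 sig0
    by (smt (verit) mult_le_cancel_right1)
  have B0: "48 * mm / \<kappa> \<le> B" unfolding B_def using kpos by simp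
  have Bpos: "0 \<le> B" using B0 mm2 kpos by (smt (verit) divide_pos_pos)
  define S where "S = {x\<in>cbox 0 1. \<bar>u x\<bar> \<le> s}"
  have Sm: "S \<in> lmeasurable" unfolding S_def by (rule meas_sub) auto
  show ?thesis
  proof (cases "\<kappa> / 4 < s")
    case True
    have "measure lebesgue S \<le> measure lebesgue (cbox (0::real^'m) 1)"
      by (rule measure_mono_fmeasurable) (use Sm in \<open>auto simp: S_def\<close>)
    also have "\<dots> = 1" using measure_cube[of 1 "0::real^'m"] unfolding cube01 by simp
    also have "\<dots> \<le> 48 * mm / \<kappa> * (\<kappa> / 4)" using mm2 kpos by simp
    also have "\<dots> \<le> B * (s * ell)"
    proof (rule mult_mono[OF B0])
      have "\<kappa> / 4 \<le> s * 1" using True by simp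
      also have "\<dots> \<le> s * ell" using l1 s by (intro mult_left_mono) auto
      finally show "\<kappa> / 4 \<le> s * ell" .
    qed (use Bpos kpos in auto)
    also have "\<dots> \<le> real N ^ CARD('m) * B * s * ell"
    proof -
      have "1 \<le> real N ^ CARD('m)" using N1 by simp
      then have "1 * (B * (s * ell)) \<le> real N ^ CARD('m) * (B * (s * ell))"
        by (rule mult_right_mono) (use Bpos s l1 in simp)
      then show ?thesis by (simp add: algebra_simps)
    qed
    finally show ?thesis unfolding Aeq S_def ell_def .
  next
    case False
    then have sk: "s \<le> \<kappa> / 4" by simp
    have Ssub: "S \<subseteq> cube 0 1" unfolding S_def cube01 by auto
    have "measure lebesgue S \<le> real N ^ CARD('m) * (B * s * ell)"
    proof (rule grid_bound[OF _ Ssub N1])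
      show "S \<in> sets lebesgue" using Sm by auto
      show "(0::real) < 1" by simp
      fix k :: "'m \<Rightarrow> nat" assume kK: "k \<in> gridK N"
      define q where "q = (\<chi> j. (0::real^'m)$j + 1 / real N * real (k j))"
      define Q where "Q = cube q \<sigma>"
      have Qeq: "gridbox 0 1 N k = Q" unfolding gridbox_def q_def \<sigma>_def Q_def by simp
      have QU: "Q \<subseteq> cbox 0 1" using gridbox_sub[OF kK, of 1 0] Qeq cube01 by auto
      have Qc: "convex Q" "compact Q" unfolding Q_def by (rule cube_convex, rule cube_compact)
      have SQ: "S \<inter> gridbox 0 1 N k = {y\<in>Q. \<bar>u y\<bar> \<le> s}" unfolding S_def Qeq using QU by auto
      have Qdiam: "norm (y - x) \<le> mm * \<sigma>" if "x \<in> Q" "y \<in> Q" for x y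
        unfolding mm_def using norm_diff_cube[of x q \<sigma> y] that unfolding Q_def by simp
      have "measure lebesgue {y\<in>Q. \<bar>u y\<bar> \<le> s} \<le> B * s * ell"
      proof (cases "\<exists>x1\<in>Q. \<kappa> / 4 \<le> norm (G x1)")
        case True
        then obtain x1 where x1: "x1 \<in> Q" "\<kappa> / 4 \<le> norm (G x1)" by blast
        obtain i where i: "norm (G x1) \<le> mm * \<bar>G x1 $ i\<bar>"
          using exists_big_comp[of "G x1"] unfolding mm_def by blast
        have cpos: "0 < \<kappa> / (8 * mm)" using kpos mm2 by simp
        have cb: "\<kappa> / (8 * mm) \<le> \<bar>G y $ i\<bar>" if yQ: "y \<in> Q" for y
        proof -
          have "norm (G y - G x1) \<le> norm (y - x1)" by (rule Gdiff[OF Qc(1) QU x1(1) yQ])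
          also have "\<dots> \<le> mm * \<sigma>" by (rule Qdiam[OF x1(1) yQ])
          also have "\<dots> \<le> \<kappa> / (8 * mm)" by (rule msig)
          finally have d1: "\<bar>(G y - G x1) $ i\<bar> \<le> \<kappa> / (8 * mm)"
            using component_le_norm_cart[of "G y - G x1" i] by linarith
          have "\<kappa> / 4 \<le> mm * \<bar>G x1 $ i\<bar>" using x1(2) i by linarith
          then have d2: "\<kappa> / (4 * mm) \<le> \<bar>G x1 $ i\<bar>" using mm2 by (simp add: pos_divide_le_eq algebra_simps)
          have d3: "\<kappa> / (4 * mm) = 2 * (\<kappa> / (8 * mm))" by simp
          have d4: "\<bar>G x1 $ i\<bar> - \<bar>G y $ i\<bar> \<le> \<bar>(G y - G x1) $ i\<bar>"
            using abs_triangle_ineq2[of "G x1 $ i" "G y $ i"] by (simp add: abs_minus_commute)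
          from d1 d2 d3 d4 show ?thesis by linarith
        qed
        have "measure lebesgue {y\<in>Q. \<bar>u y\<bar> \<le> s} \<le> 3 * (2 * s / (\<kappa> / (8 * mm))) * \<sigma> ^ (CARD('m) - 1)"
        proof (rule TL_app[OF Qc QU _ _ _ cpos cb s(1)])
          show "{y\<in>Q. \<bar>u y\<bar> \<le> s} \<subseteq> cbox q (\<chi> j. q$j + \<sigma>)" unfolding Q_def cube_def by auto
          show "\<And>j. (\<chi> j. q$j + \<sigma>) $ j - q $ j = \<sigma>" by simp
          show "0 \<le> \<sigma>" using sig0 by simp
        qed
        also have "\<dots> \<le> 3 * (2 * s / (\<kappa> / (8 * mm))) * 1"
        proof (rule mult_left_mono)
          show "\<sigma> ^ (CARD('m) - 1) \<le> 1" using sig0 sig1 by (intro power_le_one) auto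
          show "0 \<le> 3 * (2 * s / (\<kappa> / (8 * mm)))"
            by (intro mult_nonneg_nonneg divide_nonneg_pos) (use s cpos in auto)
        qed
        also have "\<dots> = 48 * mm / \<kappa> * s" using kpos mm2 by simp
        also have "\<dots> \<le> B * s" using B0 s by (intro mult_right_mono) auto
        also have "\<dots> \<le> B * s * ell" using Bpos s l1
          by (metis mult_left_mono mult_nonneg_nonneg mult.right_neutral less_eq_real_def)
        finally show ?thesis .
      next
        case False
        then have Gs: "\<And>y. y \<in> Q \<Longrightarrow> norm (G y) \<le> \<kappa> / 4" by force
        show ?thesis
        proof (cases "\<exists>x0\<in>Q. \<bar>u x0\<bar> \<le> s")
          case False
          then have e: "{y\<in>Q. \<bar>u y\<bar> \<le> s} = {}" by auto
          have "0 \<le> B * s * ell" using Bpos s l1 by simp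
          then show ?thesis unfolding e by simp
        next
          case True
          then obtain x0 where x0: "x0 \<in> Q" "\<bar>u x0\<bar> \<le> s" by blast
          have usmall: "\<bar>u y\<bar> \<le> \<kappa> / 2" if yQ: "y \<in> Q" for y
          proof -
            have "\<bar>u y - u x0\<bar> \<le> (\<kappa> / 4) * norm (y - x0)" by (rule udiff[OF Qc(1) QU x0(1) yQ Gs])
            also have "\<dots> \<le> (\<kappa> / 4) * 1"
              using Qdiam[OF x0(1) yQ] msig1 kpos by (intro mult_left_mono) auto
            finally have "\<bar>u y - u x0\<bar> \<le> \<kappa> / 4" by simp
            moreover have "\<bar>u y\<bar> \<le> \<bar>u x0\<bar> + \<bar>u y - u x0\<bar>" by linarith
            ultimately show ?thesis using x0(2) sk by linarith
          qed
          have Hbig: "\<kappa> / 4 \<le> \<bar>H y \<xi> \<bullet> \<xi>\<bar>" if "y \<in> Q" "norm \<xi> = 1" for y \<xi>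
          proof -
            have "\<kappa> \<le> \<bar>u y\<bar> + norm (G y) + \<bar>H y \<xi> \<bullet> \<xi>\<bar>" using cond[of y \<xi>] that QU by auto
            then show ?thesis using usmall[OF that(1)] Gs[OF that(1)] by linarith
          qed
          have sgn: "(\<forall>p\<in>Q \<times> sphere 0 1. \<kappa> / 4 \<le> H (fst p) (snd p) \<bullet> snd p) \<or>
                     (\<forall>p\<in>Q \<times> sphere 0 1. \<kappa> / 4 \<le> - (H (fst p) (snd p) \<bullet> snd p))"
          proof (rule sign_const)
            show "connected (Q \<times> sphere (0::real^'m) 1)"
              by (intro connected_Times convex_connected Qc(1) connected_sphere) (use m2 in simp)
            show "continuous_on (Q \<times> sphere 0 1) (\<lambda>p. H (fst p) (snd p) \<bullet> snd p)"
            proof -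
              have "Q \<times> sphere (0::real^'m) 1 \<subseteq> cbox 0 1 \<times> sphere 0 1" using QU by auto
              then show ?thesis using continuous_on_subset[OF Hc] by (simp add: case_prod_unfold)
            qed
            fix p assume "p \<in> Q \<times> sphere (0::real^'m) 1"
            then show "\<kappa> / 4 \<le> \<bar>H (fst p) (snd p) \<bullet> snd p\<bar>" using Hbig by auto
          next
            show "0 < \<kappa> / 4" using kpos by simp
          qed
          then have sgn': "(\<forall>y\<in>Q. \<forall>\<xi>. norm \<xi> = 1 \<longrightarrow> \<kappa> / 4 \<le> H y \<xi> \<bullet> \<xi>) \<or>
                           (\<forall>y\<in>Q. \<forall>\<xi>. norm \<xi> = 1 \<longrightarrow> \<kappa> / 4 \<le> - (H y \<xi> \<bullet> \<xi>))" by auto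
          have "measure lebesgue {y\<in>Q. \<bar>u y\<bar> \<le> s} \<le> (4 * s / (\<kappa> / 4)) ^ CARD('m)
             + real (nat \<lceil>log 2 (1 / s)\<rceil>) * real (nat \<lceil>16 * real CARD('m)^2 / (\<kappa> / 4)\<rceil>) ^ CARD('m) * (6 * s)"
            by (rule SC_any[OF QU Q_def _ _ sgn' s]) (use sig0 kpos in auto)
          also have "\<dots> \<le> B * s * ell"
          proof -
            have e1: "4 * s / (\<kappa> / 4) = (16 / \<kappa>) * s" by simp
            have e2: "nat \<lceil>16 * real CARD('m)^2 / (\<kappa> / 4)\<rceil> = n" unfolding n_def mm_def by simp
            have p1: "((16 / \<kappa>) * s) ^ CARD('m) \<le> (16 / \<kappa>) ^ CARD('m) * s"
            proof -
              have "s ^ CARD('m) \<le> s"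
              proof -
                have "CARD('m) = Suc (CARD('m) - 1)" using m2 by simp
                then have "s ^ CARD('m) = s * s ^ (CARD('m) - 1)" by (metis power_Suc)
                also have "\<dots> \<le> s * 1" using s by (intro mult_left_mono power_le_one) auto
                finally show ?thesis by simp
              qed
              then have "(16 / \<kappa>) ^ CARD('m) * s ^ CARD('m) \<le> (16 / \<kappa>) ^ CARD('m) * s"
                using kpos by (intro mult_left_mono) auto
              moreover have "((16 / \<kappa>) * s) ^ CARD('m) = (16 / \<kappa>) ^ CARD('m) * s ^ CARD('m)"
                by (rule power_mult_distrib)
              ultimately show ?thesis by simp
            qed
            have p2: "real (nat \<lceil>log 2 (1 / s)\<rceil>) \<le> ell" unfolding ell_def using logpos by linarith
            have p3: "(16 / \<kappa>) ^ CARD('m) * s \<le> (16 / \<kappa>) ^ CARD('m) * s * ell"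
            proof -
              have "0 \<le> (16 / \<kappa>) ^ CARD('m) * s" using s kpos by simp
              then have "(16 / \<kappa>) ^ CARD('m) * s * 1 \<le> (16 / \<kappa>) ^ CARD('m) * s * ell"
                by (rule mult_left_mono[OF l1])
              then show ?thesis by simp
            qed
            have p4: "real (nat \<lceil>log 2 (1 / s)\<rceil>) * real n ^ CARD('m) * (6 * s) \<le> ell * real n ^ CARD('m) * (6 * s)"
              using p2 s by (intro mult_right_mono) auto
            have p5: "0 \<le> 48 * mm / \<kappa> * s * ell" using mm2 kpos s l1 by simp
            have "B * s * ell = 48 * mm / \<kappa> * s * ell + (16 / \<kappa>) ^ CARD('m) * s * ell + ell * real n ^ CARD('m) * (6 * s)"
              unfolding B_def by (simp add: algebra_simps)
            with p1 p3 p4 p5 show ?thesis unfolding e1 e2 by linarith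
          qed
          finally show ?thesis .
        qed
      qed
      then show "measure lebesgue (S \<inter> gridbox 0 1 N k) \<le> B * s * ell" unfolding SQ .
    qed
    then show ?thesis unfolding Aeq S_def ell_def by (simp add: algebra_simps)
  qed
qed

end

lemma mat_eq_mv:
  fixes A B :: "real^'n^'m"
  assumes "\<And>v. A *v v = B *v v"
  shows "A = B"
proof -
  have c: "(M *v axis j 1) $ i = M $ i $ j" for M :: "real^'n^'m" and i j
  proof -
    have e: "(\<lambda>k. M$i$k * (if k = j then 1 else 0)) = (\<lambda>k. if k = j then M$i$k else 0)"
      by (rule ext) simp
    have "(M *v axis j 1) $ i = (\<Sum>k\<in>UNIV. M$i$k * (if k = j then 1 else 0))"
      unfolding matrix_vector_mult_def axis_def by simp
    also have "\<dots> = M $ i $ j" unfolding e by simp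
    finally show ?thesis .
  qed
  show ?thesis using assms c by (metis vec_eq_iff)
qed

lemma unit_cube_box: "i \<in> Basis \<Longrightarrow> (0::real^'m) \<bullet> i < (1::real^'m) \<bullet> i"
  by (auto simp: Basis_vec_def inner_axis)

lemma witness_some:
  assumes "C2_on U f" shows "C2_witness U f (grad_on U f) (hess_on U f)"
proof -
  from assms obtain Df D2f where "C2_witness U f Df D2f" unfolding C2_on_def by blast
  then have "\<exists>Df. \<exists>D2f. C2_witness U f Df D2f" by blast
  then have "\<exists>D2f. C2_witness U f (grad_on U f) D2f"
    unfolding grad_on_def by (rule someI_ex)
  then show ?thesis unfolding hess_on_def by (rule someI_ex)
qed

lemma witness_diff:
  assumes "C2_witness U f Df D2f" "C2_witness U g Dg D2g"
  shows "C2_witness U (\<lambda>x. f x - g x) (\<lambda>x. Df x - Dg x) (\<lambda>x. D2f x - D2g x)"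
  unfolding C2_witness_def
proof (intro conjI ballI)
  fix x assume x: "x \<in> U"
  have "((\<lambda>x. f x - g x) has_derivative (\<lambda>h. Df x \<bullet> h - Dg x \<bullet> h)) (at x within U)"
    using assms x unfolding C2_witness_def by (intro has_derivative_diff) auto
  then show "((\<lambda>x. f x - g x) has_derivative (\<lambda>h. (Df x - Dg x) \<bullet> h)) (at x within U)"
    by (simp add: inner_diff_left)
  have "((\<lambda>x. Df x - Dg x) has_derivative (\<lambda>h. D2f x *v h - D2g x *v h)) (at x within U)"
    using assms x unfolding C2_witness_def by (intro has_derivative_diff) auto
  then show "((\<lambda>x. Df x - Dg x) has_derivative (\<lambda>h. (D2f x - D2g x) *v h)) (at x within U)"
    by (simp add: matrix_vector_mult_diff_rdistrib)
next
  show "continuous_on U (\<lambda>x. D2f x - D2g x)"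
    using assms unfolding C2_witness_def by (intro continuous_on_diff) auto
qed

lemma C2_diff: "C2_on U f \<Longrightarrow> C2_on U g \<Longrightarrow> C2_on U (\<lambda>x. f x - g x)"
  unfolding C2_on_def using witness_diff by blast

lemma uniq:
  assumes w1: "C2_witness unit_cube f Df D2f" and w2: "C2_witness unit_cube f Df' D2f'"
    and x: "x \<in> (unit_cube :: (real^'m) set)"
  shows "Df x = Df' x" "D2f x = D2f' x"
proof -
  have D1: "Df y = Df' y" if y: "y \<in> (unit_cube :: (real^'m) set)" for y
  proof -
    have "(\<lambda>h. Df y \<bullet> h) = (\<lambda>h. Df' y \<bullet> h)"
      using frechet_derivative_unique_within_closed_interval[OF unit_cube_box, of y f]
        w1 w2 y unfolding C2_witness_def unit_cube_def by blast
    then have "Df y \<bullet> axis i 1 = Df' y \<bullet> axis i 1" for i by metis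
    then show ?thesis by (simp add: vec_eq_iff cart_eq_inner_axis)
  qed
  then show "Df x = Df' x" using x .
  have d1: "(Df has_derivative (\<lambda>h. D2f x *v h)) (at x within unit_cube)"
    using w1 x unfolding C2_witness_def by blast
  have "(Df' has_derivative (\<lambda>h. D2f x *v h)) (at x within unit_cube)"
    by (rule has_derivative_transform_within[OF d1, of 1]) (use x D1 in auto)
  moreover have "(Df' has_derivative (\<lambda>h. D2f' x *v h)) (at x within unit_cube)"
    using w2 x unfolding C2_witness_def by blast
  ultimately have "(\<lambda>h. D2f x *v h) = (\<lambda>h. D2f' x *v h)"
    using frechet_derivative_unique_within_closed_interval[OF unit_cube_box, of x Df']
      x unfolding unit_cube_def by blast
  then show "D2f x = D2f' x" by (intro mat_eq_mv) metis
qed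

lemma grad_hess_diff:
  assumes "C2_on unit_cube f" "C2_on unit_cube g" "x \<in> (unit_cube :: (real^'m) set)"
  shows "grad_on unit_cube (\<lambda>y. f y - g y) x = grad_on unit_cube f x - grad_on unit_cube g x"
    "hess_on unit_cube (\<lambda>y. f y - g y) x = hess_on unit_cube f x - hess_on unit_cube g x"
proof -
  have w: "C2_witness unit_cube (\<lambda>y. f y - g y) (\<lambda>y. grad_on unit_cube f y - grad_on unit_cube g y)
      (\<lambda>y. hess_on unit_cube f y - hess_on unit_cube g y)"
    by (rule witness_diff[OF witness_some[OF assms(1)] witness_some[OF assms(2)]])
  have w': "C2_witness unit_cube (\<lambda>y. f y - g y) (grad_on unit_cube (\<lambda>y. f y - g y)) (hess_on unit_cube (\<lambda>y. f y - g y))"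
    by (rule witness_some[OF C2_diff[OF assms(1,2)]])
  show "grad_on unit_cube (\<lambda>y. f y - g y) x = grad_on unit_cube f x - grad_on unit_cube g x"
    using uniq(1)[OF w' w assms(3)] by simp
  show "hess_on unit_cube (\<lambda>y. f y - g y) x = hess_on unit_cube f x - hess_on unit_cube g x"
    using uniq(2)[OF w' w assms(3)] by simp
qed

abbreviation UC :: "(real^'m) set" where "UC \<equiv> unit_cube"

lemma UC_ne: "(0::real^'m) \<in> UC" unfolding unit_cube_def by (simp add: mem_box_cart)
lemma UC_compact: "compact (UC :: (real^'m) set)" unfolding unit_cube_def by simp

lemma c2_cont:
  assumes "C2_on UC h"
  shows "continuous_on UC h" "continuous_on UC (grad_on UC h)" "continuous_on UC (hess_on UC h)"
proof -
  have w: "C2_witness UC h (grad_on UC h) (hess_on UC h)" by (rule witness_some[OF assms])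
  show "continuous_on UC h" by (rule has_derivative_continuous_on) (use w in \<open>auto simp: C2_witness_def\<close>)
  show "continuous_on UC (grad_on UC h)" by (rule has_derivative_continuous_on) (use w in \<open>auto simp: C2_witness_def\<close>)
  show "continuous_on UC (hess_on UC h)" using w by (simp add: C2_witness_def)
qed

lemma onorm_mat_le: "onorm ((*v) (A::real^'n^'m)) \<le> real CARD('m) * real CARD('n) * norm A"
proof -
  have "\<bar>A $ i $ j\<bar> \<le> norm A" for i j
    using component_le_norm_cart[of "A $ i" j] Finite_Cartesian_Product.norm_nth_le[of A i] by linarith
  then show ?thesis by (rule onorm_le_matrix_component)
qed

lemma c2_bdd:
  assumes "C2_on UC (h :: real^'m \<Rightarrow> real)"
  shows "bdd_above ((\<lambda>x. \<bar>h x\<bar>) ` UC)" "bdd_above ((\<lambda>x. norm (grad_on UC h x)) ` UC)"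
    "bdd_above ((\<lambda>x. onorm (\<lambda>v. hess_on UC h x *v v)) ` UC)"
proof -
  note c = c2_cont[OF assms]
  have "compact ((\<lambda>x. \<bar>h x\<bar>) ` UC)"
    by (rule compact_continuous_image[OF _ UC_compact]) (intro continuous_intros c(1))
  then show "bdd_above ((\<lambda>x. \<bar>h x\<bar>) ` UC)" by (intro bounded_imp_bdd_above compact_imp_bounded)
  have "compact ((\<lambda>x. norm (grad_on UC h x)) ` UC)"
    by (rule compact_continuous_image[OF _ UC_compact]) (intro continuous_intros c(2))
  then show "bdd_above ((\<lambda>x. norm (grad_on UC h x)) ` UC)" by (intro bounded_imp_bdd_above compact_imp_bounded)
  have "compact (hess_on UC h ` UC)" by (rule compact_continuous_image[OF c(3) UC_compact])
  then obtain B where B: "\<And>x. x \<in> UC \<Longrightarrow> norm (hess_on UC h x) \<le> B"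
    using compact_imp_bounded bounded_iff by (metis imageI)
  show "bdd_above ((\<lambda>x. onorm (\<lambda>v. hess_on UC h x *v v)) ` UC)"
  proof (rule bdd_aboveI2)
    fix x :: "real^'m" assume "x \<in> UC"
    have "onorm ((*v) (hess_on UC h x)) \<le> real CARD('m) * real CARD('m) * norm (hess_on UC h x)"
      by (rule onorm_mat_le)
    also have "\<dots> \<le> real CARD('m) * real CARD('m) * B"
      using B[OF \<open>x \<in> UC\<close>] by (intro mult_left_mono) auto
    finally show "onorm (\<lambda>v. hess_on UC h x *v v) \<le> real CARD('m) * real CARD('m) * B" by simp
  qed
qed

lemma sup_nonneg:
  fixes f :: "'a \<Rightarrow> real"
  assumes "bdd_above (f ` S)" "x \<in> S" "\<And>y. 0 \<le> f y"
  shows "0 \<le> (SUP y\<in>S. f y)" "f x \<le> (SUP y\<in>S. f y)"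
proof -
  show "f x \<le> (SUP y\<in>S. f y)" by (rule cSUP_upper[OF assms(2,1)])
  then show "0 \<le> (SUP y\<in>S. f y)" using assms(3)[of x] by linarith
qed

lemma c2norm_bounds:
  assumes "C2_on UC (h :: real^'m \<Rightarrow> real)" "x \<in> UC"
  shows "\<bar>h x\<bar> \<le> c2norm UC h" "norm (grad_on UC h x) \<le> c2norm UC h"
    "onorm (\<lambda>v. hess_on UC h x *v v) \<le> c2norm UC h" "0 \<le> c2norm UC h"
proof -
  note b = c2_bdd[OF assms(1)]
  have on0: "0 \<le> onorm (\<lambda>v. hess_on UC h y *v v)" for y
    by (rule onorm_pos_le[OF matrix_vector_mul_bounded_linear])
  note s1 = sup_nonneg[OF b(1) assms(2)] and s2 = sup_nonneg[OF b(2) assms(2)]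
    and s3 = sup_nonneg[OF b(3) assms(2) on0]
  show "\<bar>h x\<bar> \<le> c2norm UC h" "norm (grad_on UC h x) \<le> c2norm UC h"
    "onorm (\<lambda>v. hess_on UC h x *v v) \<le> c2norm UC h" "0 \<le> c2norm UC h"
    unfolding c2norm_def using s1 s2 s3 by auto
qed

lemma c2dist_sym:
  assumes "C2_on UC f" "C2_on UC (g :: real^'m \<Rightarrow> real)"
  shows "c2dist UC f g = c2dist UC g f"
proof -
  have e1: "(SUP x\<in>UC. \<bar>f x - g x\<bar>) = (SUP x\<in>UC. \<bar>g x - f x\<bar>)"
    by (rule SUP_cong) (auto simp: abs_minus_commute)
  have e2: "(SUP x\<in>UC. norm (grad_on UC (\<lambda>y. f y - g y) x)) = (SUP x\<in>UC. norm (grad_on UC (\<lambda>y. g y - f y) x))"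
    by (rule SUP_cong) (auto simp: grad_hess_diff[OF assms] grad_hess_diff[OF assms(2,1)] norm_minus_commute)
  have e3: "(SUP x\<in>UC. onorm (\<lambda>v. hess_on UC (\<lambda>y. f y - g y) x *v v)) = (SUP x\<in>UC. onorm (\<lambda>v. hess_on UC (\<lambda>y. g y - f y) x *v v))"
  proof (rule SUP_cong)
    fix x :: "real^'m" assume x: "x \<in> UC"
    have "(\<lambda>v. hess_on UC (\<lambda>y. g y - f y) x *v v) = (\<lambda>v. - (hess_on UC (\<lambda>y. f y - g y) x *v v))"
      by (rule ext) (simp add: grad_hess_diff[OF assms x] grad_hess_diff[OF assms(2,1) x] matrix_vector_mult_diff_rdistrib)
    then show "onorm (\<lambda>v. hess_on UC (\<lambda>y. f y - g y) x *v v) = onorm (\<lambda>v. hess_on UC (\<lambda>y. g y - f y) x *v v)"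
      by (simp add: onorm_neg)
  qed simp
  show ?thesis unfolding c2dist_def c2norm_def e1 e2 e3 ..
qed

lemma sup_add_le:
  fixes a b c :: "'a \<Rightarrow> real"
  assumes "S \<noteq> {}" "bdd_above (a ` S)" "bdd_above (b ` S)" "\<And>x. x \<in> S \<Longrightarrow> c x \<le> a x + b x"
  shows "(SUP x\<in>S. c x) \<le> (SUP x\<in>S. a x) + (SUP x\<in>S. b x)"
proof (rule cSUP_least[OF assms(1)])
  fix x assume x: "x \<in> S"
  have "a x \<le> (SUP x\<in>S. a x)" "b x \<le> (SUP x\<in>S. b x)" using cSUP_upper[OF x] assms(2,3) by auto
  then show "c x \<le> (SUP x\<in>S. a x) + (SUP x\<in>S. b x)" using assms(4)[OF x] by linarith
qed

lemma c2dist_tri: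
  assumes f: "C2_on UC f" and g: "C2_on UC (g :: real^'m \<Rightarrow> real)" and k: "C2_on UC k"
  shows "c2dist UC f g \<le> c2dist UC f k + c2dist UC k g"
proof -
  have fk: "C2_on UC (\<lambda>y. f y - k y)" and kg: "C2_on UC (\<lambda>y. k y - g y)" using C2_diff f g k by blast+
  note b1 = c2_bdd[OF fk] and b2 = c2_bdd[OF kg]
  have ne: "UC \<noteq> {}" using UC_ne by blast
  have t1: "(SUP x\<in>UC. \<bar>f x - g x\<bar>) \<le> (SUP x\<in>UC. \<bar>f x - k x\<bar>) + (SUP x\<in>UC. \<bar>k x - g x\<bar>)"
    by (rule sup_add_le[OF ne b1(1) b2(1)]) linarith
  have t2: "(SUP x\<in>UC. norm (grad_on UC (\<lambda>y. f y - g y) x)) \<le>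
      (SUP x\<in>UC. norm (grad_on UC (\<lambda>y. f y - k y) x)) + (SUP x\<in>UC. norm (grad_on UC (\<lambda>y. k y - g y) x))"
  proof (rule sup_add_le[OF ne b1(2) b2(2)])
    fix x :: "real^'m" assume x: "x \<in> UC"
    have "grad_on UC (\<lambda>y. f y - g y) x = grad_on UC (\<lambda>y. f y - k y) x + grad_on UC (\<lambda>y. k y - g y) x"
      by (simp add: grad_hess_diff[OF f g x] grad_hess_diff[OF f k x] grad_hess_diff[OF k g x])
    then show "norm (grad_on UC (\<lambda>y. f y - g y) x) \<le> norm (grad_on UC (\<lambda>y. f y - k y) x) + norm (grad_on UC (\<lambda>y. k y - g y) x)"
      by (simp add: norm_triangle_ineq)
  qed
  have t3: "(SUP x\<in>UC. onorm (\<lambda>v. hess_on UC (\<lambda>y. f y - g y) x *v v)) \<le>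
      (SUP x\<in>UC. onorm (\<lambda>v. hess_on UC (\<lambda>y. f y - k y) x *v v)) + (SUP x\<in>UC. onorm (\<lambda>v. hess_on UC (\<lambda>y. k y - g y) x *v v))"
  proof (rule sup_add_le[OF ne b1(3) b2(3)])
    fix x :: "real^'m" assume x: "x \<in> UC"
    have "(\<lambda>v. hess_on UC (\<lambda>y. f y - g y) x *v v) = (\<lambda>v. hess_on UC (\<lambda>y. f y - k y) x *v v + hess_on UC (\<lambda>y. k y - g y) x *v v)"
      by (rule ext) (simp add: grad_hess_diff[OF f g x] grad_hess_diff[OF f k x] grad_hess_diff[OF k g x]
          matrix_vector_mult_diff_rdistrib)
    then show "onorm (\<lambda>v. hess_on UC (\<lambda>y. f y - g y) x *v v) \<le> onorm (\<lambda>v. hess_on UC (\<lambda>y. f y - k y) x *v v) + onorm (\<lambda>v. hess_on UC (\<lambda>y. k y - g y) x *v v)"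
      using onorm_triangle[OF matrix_vector_mul_bounded_linear matrix_vector_mul_bounded_linear] by simp
  qed
  show ?thesis unfolding c2dist_def c2norm_def using t1 t2 t3 by linarith
qed

lemma cont_quad:
  fixes M :: "'a::topological_space \<Rightarrow> real^'m^'m"
  assumes "continuous_on S M"
  shows "continuous_on (S \<times> T) (\<lambda>(x,\<xi>). (M x *v \<xi>) \<bullet> \<xi>)"
proof -
  have e: "(\<lambda>(x,\<xi>). (M x *v \<xi>) \<bullet> \<xi>) = (\<lambda>p. \<Sum>i\<in>UNIV. (\<Sum>j\<in>UNIV. M (fst p) $ i $ j * snd p $ j) * snd p $ i)"
    by (rule ext) (simp add: case_prod_unfold inner_vec_def matrix_vector_mult_def)
  have cM: "continuous_on (S \<times> T) (\<lambda>p. M (fst p))"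
    by (rule continuous_on_compose2[OF assms continuous_on_fst]) auto
  have cMij: "continuous_on (S \<times> T) (\<lambda>p. M (fst p) $ i $ j)" for i j
    by (intro continuous_on_component cM)
  have cs: "continuous_on (S \<times> T) (\<lambda>p. snd p $ i)" for i :: 'm
    by (intro continuous_on_component continuous_on_snd continuous_on_id)
  show ?thesis unfolding e
    by (intro continuous_on_sum continuous_on_mult cMij cs)
qed

lemma pair_sublevel:
  fixes f g :: "real^'m \<Rightarrow> real"
  assumes m2: "CARD('m) \<ge> 2" and f: "C2_on UC f" and g: "C2_on UC g" and K: "0 < K"
    and c3: "\<And>\<xi>::real^'m. norm \<xi> = 1 \<Longrightarrow>
        (INF x\<in>UC. \<bar>f x - g x\<bar> + norm (grad_on UC (\<lambda>y. f y - g y) x) + \<bar>dd2 UC (\<lambda>y. f y - g y) \<xi> x\<bar>)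
          \<ge> c2dist UC f g / K"
    and \<delta>: "0 < \<delta>" "2 * \<delta> \<le> c2dist UC f g"
  shows "measure lebesgue {x\<in>UC. \<bar>f x - g x\<bar> \<le> 2 * \<delta>}
     \<le> Asub CARD('m) (min 1 (1 / K)) * (2 * \<delta> / c2dist UC f g) * (1 + log 2 (c2dist UC f g / (2 * \<delta>)))"
proof -
  define h where "h = (\<lambda>y. f y - g y)"
  define r where "r = c2dist UC f g"
  have rh: "r = c2norm UC h" unfolding r_def c2dist_def h_def ..
  have r0: "0 < r" using \<delta> unfolding r_def by simp
  have hC: "C2_on UC h" unfolding h_def by (rule C2_diff[OF f g])
  have w: "C2_witness UC h (grad_on UC h) (hess_on UC h)" by (rule witness_some[OF hC])
  note hb = c2norm_bounds[OF hC]
  have UCe: "UC = cbox (0::real^'m) 1" by (simp add: unit_cube_def)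
  define \<kappa> where "\<kappa> = min 1 (1 / K)"
  interpret S: subl "\<lambda>x. h x / r" "\<lambda>x. (1 / r) *\<^sub>R grad_on UC h x" "\<lambda>x v. (1 / r) *\<^sub>R (hess_on UC h x *v v)" \<kappa>
  proof
    show "CARD('m) \<ge> 2" by (rule m2)
    fix x :: "real^'m" assume x: "x \<in> cbox 0 1"
    then have xU: "x \<in> UC" using UCe by simp
    have d1: "(h has_derivative (\<lambda>v. grad_on UC h x \<bullet> v)) (at x within cbox 0 1)"
      using w xU UCe unfolding C2_witness_def by auto
    have "((\<lambda>x. (1 / r) * h x) has_derivative (\<lambda>v. (1 / r) * (grad_on UC h x \<bullet> v))) (at x within cbox 0 1)"
      by (rule has_derivative_mult_right[OF d1])
    then show "((\<lambda>x. h x / r) has_derivative (\<lambda>v. (1 / r) *\<^sub>R grad_on UC h x \<bullet> v)) (at x within cbox 0 1)"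
      by simp
    have d2: "(grad_on UC h has_derivative (\<lambda>v. hess_on UC h x *v v)) (at x within cbox 0 1)"
      using w xU UCe unfolding C2_witness_def by auto
    show "((\<lambda>x. (1 / r) *\<^sub>R grad_on UC h x) has_derivative (\<lambda>v. (1 / r) *\<^sub>R (hess_on UC h x *v v))) (at x within cbox 0 1)"
      by (rule has_derivative_scaleR_right[OF d2])
    have "onorm (\<lambda>v. (1 / r) *\<^sub>R (hess_on UC h x *v v)) = \<bar>1 / r\<bar> * onorm (\<lambda>v. hess_on UC h x *v v)"
      by (rule onorm_scaleR[OF matrix_vector_mul_bounded_linear])
    also have "\<dots> \<le> (1 / r) * r" using hb(3)[OF xU] r0 rh by (simp add: divide_right_mono)
    finally show "onorm (\<lambda>v. (1 / r) *\<^sub>R (hess_on UC h x *v v)) \<le> 1" using r0 by simp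
    show "norm ((1 / r) *\<^sub>R grad_on UC h x) \<le> 1" using hb(2)[OF xU] r0 rh by simp
    fix \<xi> :: "real^'m" assume \<xi>: "norm \<xi> = 1"
    have bb: "bdd_below ((\<lambda>x. \<bar>h x\<bar> + norm (grad_on UC h x) + \<bar>dd2 UC h \<xi> x\<bar>) ` UC)"
      by (rule bdd_belowI2[of _ 0]) auto
    have "r / K \<le> (INF x\<in>UC. \<bar>h x\<bar> + norm (grad_on UC h x) + \<bar>dd2 UC h \<xi> x\<bar>)"
      using c3[OF \<xi>] unfolding h_def r_def by simp
    also have "\<dots> \<le> \<bar>h x\<bar> + norm (grad_on UC h x) + \<bar>dd2 UC h \<xi> x\<bar>" by (rule cINF_lower[OF bb xU])
    finally have v: "r / K \<le> \<bar>h x\<bar> + norm (grad_on UC h x) + \<bar>(hess_on UC h x *v \<xi>) \<bullet> \<xi>\<bar>"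
      unfolding dd2_def .
    have "\<bar>h x / r\<bar> + norm ((1 / r) *\<^sub>R grad_on UC h x) + \<bar>((1 / r) *\<^sub>R (hess_on UC h x *v \<xi>)) \<bullet> \<xi>\<bar>
        = (\<bar>h x\<bar> + norm (grad_on UC h x) + \<bar>(hess_on UC h x *v \<xi>) \<bullet> \<xi>\<bar>) / r"
      using r0 by (simp add: abs_mult add_divide_distrib)
    also have "\<dots> \<ge> (r / K) / r" using v r0 by (intro divide_right_mono) auto
    finally have "1 / K \<le> \<bar>h x / r\<bar> + norm ((1 / r) *\<^sub>R grad_on UC h x) + \<bar>((1 / r) *\<^sub>R (hess_on UC h x *v \<xi>)) \<bullet> \<xi>\<bar>"
      using r0 by simp
    then show "\<kappa> \<le> \<bar>h x / r\<bar> + norm ((1 / r) *\<^sub>R grad_on UC h x) + \<bar>(1 / r) *\<^sub>R (hess_on UC h x *v \<xi>) \<bullet> \<xi>\<bar>"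
      unfolding \<kappa>_def by linarith
  next
    have "continuous_on (cbox 0 1 \<times> sphere 0 1) (\<lambda>(x,\<xi>). (hess_on UC h x *v \<xi>) \<bullet> \<xi>)"
      by (rule cont_quad) (use c2_cont(3)[OF hC] UCe in simp)
    then have "continuous_on (cbox 0 1 \<times> sphere 0 1) (\<lambda>p. (1 / r) * ((\<lambda>(x,\<xi>). (hess_on UC h x *v \<xi>) \<bullet> \<xi>) p))"
      by (intro continuous_on_mult continuous_on_const)
    then show "continuous_on (cbox 0 1 \<times> sphere 0 1) (\<lambda>(x, \<xi>). (1 / r) *\<^sub>R (hess_on UC h x *v \<xi>) \<bullet> \<xi>)"
      by (simp add: case_prod_unfold)
  next
    show "0 < \<kappa>" unfolding \<kappa>_def using K by simp
    show "\<kappa> \<le> 1" unfolding \<kappa>_def by simp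
  qed
  define s where "s = 2 * \<delta> / r"
  have s0: "0 < s" unfolding s_def using \<delta> r0 by simp
  have s1: "s \<le> 1" unfolding s_def using \<delta> r0 r_def by simp
  have "measure lebesgue {x\<in>cbox 0 1. \<bar>h x / r\<bar> \<le> s} \<le> Asub CARD('m) \<kappa> * s * (1 + log 2 (1 / s))"
    by (rule S.SUB[OF s0 s1])
  moreover have "{x\<in>cbox 0 1. \<bar>h x / r\<bar> \<le> s} = {x\<in>UC. \<bar>f x - g x\<bar> \<le> 2 * \<delta>}"
  proof -
    have eqv: "\<bar>h x / r\<bar> \<le> s \<longleftrightarrow> \<bar>h x\<bar> \<le> 2 * \<delta>" for x
    proof -
      have "\<bar>h x / r\<bar> = \<bar>h x\<bar> / r" using r0 by (simp add: abs_divide)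
      then show ?thesis unfolding s_def using r0 by (simp add: divide_le_cancel)
    qed
    show ?thesis using eqv unfolding h_def UCe by blast
  qed
  moreover have "1 / s = r / (2 * \<delta>)" unfolding s_def by simp
  ultimately show ?thesis unfolding s_def \<kappa>_def r_def by simp
qed

lemma closed_fdelta:
  assumes "continuous_on UC f" shows "closed (fdelta (f :: real^'m \<Rightarrow> real) \<delta>)"
proof -
  have c: "continuous_on (UC \<times> UNIV) (\<lambda>p. \<bar>snd p - f (fst p)\<bar>)"
    by (intro continuous_intros continuous_on_compose2[OF assms continuous_on_fst]) auto
  have cl: "closed (UC \<times> (UNIV :: real set))"
    using compact_imp_closed[OF UC_compact] by (intro closed_Times) auto
  have "fdelta f \<delta> = (UC \<times> UNIV) \<inter> (\<lambda>p. \<bar>snd p - f (fst p)\<bar>) -` {..\<delta>}"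
    unfolding fdelta_def by auto
  then show ?thesis using continuous_closed_preimage[OF c cl closed_atMost] by simp
qed

lemma closed_E:
  fixes f g :: "real^'m \<Rightarrow> real"
  assumes "continuous_on UC f" "continuous_on UC g"
  shows "closed {x\<in>(UC :: (real^'m) set). \<bar>f x - g x\<bar> \<le> c}"
proof -
  have c: "continuous_on UC (\<lambda>x. \<bar>f x - g x\<bar>)" by (intro continuous_intros assms)
  have "{x\<in>UC. \<bar>f x - g x\<bar> \<le> c} = UC \<inter> (\<lambda>x. \<bar>f x - g x\<bar>) -` {..c}" by auto
  then show ?thesis using continuous_closed_preimage[OF c compact_imp_closed[OF UC_compact] closed_atMost] by simp
qed

lemma slab_pair:
  fixes f g :: "real^'m \<Rightarrow> real"
  assumes cf: "continuous_on UC f" and cg: "continuous_on UC g" and \<delta>: "0 < \<delta>"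
  shows "measure lborel (UC \<times> {0..1} \<inter> fdelta f \<delta> \<inter> fdelta g \<delta>)
     \<le> 2 * \<delta> * measure lebesgue {x\<in>UC. \<bar>f x - g x\<bar> \<le> 2 * \<delta>}"
proof -
  define S where "S = UC \<times> {0..1::real} \<inter> fdelta f \<delta> \<inter> fdelta g \<delta>"
  define E where "E = {x\<in>(UC :: (real^'m) set). \<bar>f x - g x\<bar> \<le> 2 * \<delta>}"
  have Scl: "closed S" unfolding S_def
    by (intro closed_Int closed_Times compact_imp_closed[OF UC_compact] closed_fdelta[OF cf]
        closed_fdelta[OF cg] closed_atLeastAtMost)
  have Sb: "S \<in> sets borel" using Scl by (simp add: borel_closed)
  have Ecl: "closed E" unfolding E_def by (rule closed_E[OF cf cg])
  have Eb: "E \<in> sets borel" using Ecl by (simp add: borel_closed)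
  have Ebd: "bounded E" unfolding E_def using UC_compact compact_imp_bounded bounded_subset
    by (metis (no_types, lifting) mem_Collect_eq subsetI)
  have Efin: "emeasure lborel E < \<infinity>" by (rule emeasure_bounded_finite[OF Ebd])
  have "emeasure lborel S = emeasure (lborel \<Otimes>\<^sub>M lborel) S" by (simp add: lborel_prod)
  also have "\<dots> = \<integral>\<^sup>+ x. emeasure lborel (Pair x -` S) \<partial>lborel"
    by (rule lborel.emeasure_pair_measure_alt) (subst lborel_prod, use Sb in simp)
  also have "\<dots> \<le> \<integral>\<^sup>+ x. ennreal (2 * \<delta>) * indicator E x \<partial>lborel"
  proof (rule nn_integral_mono)
    fix x :: "real^'m"
    show "emeasure lborel (Pair x -` S) \<le> ennreal (2 * \<delta>) * indicator E x"
    proof (cases "x \<in> E")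
      case True
      have "Pair x -` S \<subseteq> {f x - \<delta> .. f x + \<delta>}" unfolding S_def fdelta_def by auto
      then have "emeasure lborel (Pair x -` S) \<le> emeasure lborel {f x - \<delta> .. f x + \<delta>}"
        by (rule emeasure_mono) simp
      also have "\<dots> = ennreal (2 * \<delta>)" using \<delta> by (simp add: emeasure_lborel_Icc)
      finally show ?thesis using True by simp
    next
      case False
      have "Pair x -` S = {}"
      proof (rule ccontr)
        assume "Pair x -` S \<noteq> {}"
        then obtain y where "(x, y) \<in> S" by auto
        then have "x \<in> UC" "\<bar>y - f x\<bar> \<le> \<delta>" "\<bar>y - g x\<bar> \<le> \<delta>" unfolding S_def fdelta_def by auto
        then have "x \<in> E" unfolding E_def by auto
        then show False using False by simp
      qed
      then show ?thesis by simp
    qed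
  qed
  also have "\<dots> = ennreal (2 * \<delta>) * emeasure lborel E"
    using nn_integral_cmult_indicator[of E lborel "ennreal (2 * \<delta>)"] Eb by (simp add: mult.commute)
  also have "\<dots> = ennreal (2 * \<delta> * measure lborel E)"
    using Efin \<delta> by (simp add: emeasure_eq_ennreal_measure ennreal_mult)
  finally have le: "emeasure lborel S \<le> ennreal (2 * \<delta> * measure lborel E)" .
  have "measure lborel S \<le> 2 * \<delta> * measure lborel E"
    using le \<delta> by (simp add: measure_def enn2real_leI)
  moreover have "measure lebesgue E = measure lborel E"
    using Eb by (simp add: measure_completion)
  ultimately show ?thesis unfolding S_def E_def by simp
qed

lemma integral_expand:
  fixes F :: "(real^'m \<Rightarrow> real) set"
  assumes F: "finite F" "\<And>f. f \<in> F \<Longrightarrow> continuous_on UC f"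
  shows "set_lebesgue_integral lborel (UC \<times> {0..1}) (\<lambda>p. (\<Sum>f\<in>F. indicator (fdelta f \<delta>) p)\<^sup>2)
     = (\<Sum>f\<in>F. \<Sum>g\<in>F. measure lborel (UC \<times> {0..1} \<inter> fdelta f \<delta> \<inter> fdelta g \<delta>))"
proof -
  define X where "X = (UC :: (real^'m) set) \<times> {0..1::real}"
  define A where "A f g = X \<inter> fdelta f \<delta> \<inter> fdelta g \<delta>" for f g :: "real^'m \<Rightarrow> real"
  have iA: "(indicator (A f g) p :: real) = indicator X p * (indicator (fdelta f \<delta>) p * indicator (fdelta g \<delta>) p)"
    for f g and p :: "(real^'m) \<times> real"
    unfolding A_def by (simp add: indicator_inter_arith mult.assoc)
  have pw: "indicator X p *\<^sub>R (\<Sum>f\<in>F. indicator (fdelta f \<delta>) p)\<^sup>2 = (\<Sum>f\<in>F. \<Sum>g\<in>F. (indicator (A f g) p :: real))"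
    for p
    unfolding iA power2_eq_square sum_product by (simp add: sum_distrib_left)
  have Ab: "A f g \<in> sets lborel" and Afin: "emeasure lborel (A f g) < \<infinity>" if "f \<in> F" "g \<in> F" for f g
  proof -
    have "closed (A f g)" unfolding A_def X_def
      by (intro closed_Int closed_Times compact_imp_closed[OF UC_compact] closed_fdelta F that
          closed_atLeastAtMost)
    then show "A f g \<in> sets lborel" by (simp add: borel_closed)
    have "bounded X" unfolding X_def using UC_compact by (intro bounded_Times compact_imp_bounded) auto
    then have "bounded (A f g)" unfolding A_def by (rule bounded_subset) auto
    then show "emeasure lborel (A f g) < \<infinity>" by (rule emeasure_bounded_finite)
  qed
  have int: "integrable lborel (\<lambda>p. indicator (A f g) p :: real)" if "f \<in> F" "g \<in> F" for f g
    by (rule integrable_real_indicator[OF Ab[OF that] Afin[OF that]])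
  have "set_lebesgue_integral lborel X (\<lambda>p. (\<Sum>f\<in>F. indicator (fdelta f \<delta>) p)\<^sup>2)
      = (LINT p|lborel. (\<Sum>f\<in>F. \<Sum>g\<in>F. (indicator (A f g) p :: real)))"
    unfolding set_lebesgue_integral_def pw ..
  also have "\<dots> = (\<Sum>f\<in>F. LINT p|lborel. (\<Sum>g\<in>F. (indicator (A f g) p :: real)))"
    by (rule Bochner_Integration.integral_sum) (use int in \<open>auto intro!: integrable_sum\<close>)
  also have "\<dots> = (\<Sum>f\<in>F. \<Sum>g\<in>F. LINT p|lborel. (indicator (A f g) p :: real))"
    by (rule sum.cong[OF refl], rule Bochner_Integration.integral_sum) (use int in auto)
  also have "\<dots> = (\<Sum>f\<in>F. \<Sum>g\<in>F. measure lborel (A f g))"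
    by (simp add: integral_indicator)
  finally show ?thesis unfolding X_def A_def .
qed

lemma c2dist_self:
  assumes "C2_on UC (f :: real^'m \<Rightarrow> real)"
  shows "c2dist UC f f = 0"
proof -
  have ne: "UC \<noteq> ({} :: (real^'m) set)" using UC_ne by blast
  have e1: "(SUP x\<in>UC. \<bar>f x - f x\<bar>) = (SUP x\<in>(UC :: (real^'m) set). (0::real))"
    by (rule SUP_cong) auto
  have g0: "grad_on UC (\<lambda>y. f y - f y) x = 0" "hess_on UC (\<lambda>y. f y - f y) x = 0" if "x \<in> UC" for x
    using grad_hess_diff[OF assms assms that] by simp_all
  have e2: "(SUP x\<in>UC. norm (grad_on UC (\<lambda>y. f y - f y) x)) = (SUP x\<in>(UC :: (real^'m) set). (0::real))"
    by (rule SUP_cong) (use g0 in simp_all)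
  have e3: "(SUP x\<in>UC. onorm (\<lambda>v. hess_on UC (\<lambda>y. f y - f y) x *v v)) = (SUP x\<in>(UC :: (real^'m) set). (0::real))"
    by (rule SUP_cong) (use g0 in \<open>simp_all add: onorm_zero\<close>)
  have e0: "(\<lambda>y. f y - f y) = (\<lambda>y. 0)" by simp
  show ?thesis unfolding c2dist_def c2norm_def e1 e2 e3 using ne by simp
qed

lemma C2X_C2: "f \<in> C2X \<Longrightarrow> C2_on UC f" unfolding C2X_def by auto

abbreviation dd :: "(real^'m \<Rightarrow> real) \<Rightarrow> (real^'m \<Rightarrow> real) \<Rightarrow> real" where
  "dd \<equiv> c2dist UC"

lemma covnum_le_card:
  assumes "finite A" "A \<subseteq> (C2X :: (real^'m \<Rightarrow> real) set)" "0 \<le> \<delta>"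
  shows "covnum C2X dd A \<delta> \<le> card A"
proof -
  have "A \<subseteq> (\<Union>c\<in>A. {y. dd c y \<le> \<delta>})"
  proof
    fix y assume "y \<in> A"
    then have "dd y y = 0" using assms(2) c2dist_self C2X_C2 by blast
    then show "y \<in> (\<Union>c\<in>A. {y. dd c y \<le> \<delta>})" using \<open>y \<in> A\<close> assms(3) by (intro UN_I[of y]) auto
  qed
  then have "A \<in> {C. finite C \<and> C \<subseteq> C2X \<and> A \<subseteq> (\<Union>c\<in>C. {y. dd c y \<le> \<delta>})}"
    using assms(1,2) by blast
  then have "card A \<in> card ` {C. finite C \<and> C \<subseteq> C2X \<and> A \<subseteq> (\<Union>c\<in>C. {y. dd c y \<le> \<delta>})}" by blast
  then show ?thesis unfolding covnum_def by (rule cInf_lower) simp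
qed

lemma covnum_attained:
  assumes "finite A" "A \<subseteq> (C2X :: (real^'m \<Rightarrow> real) set)" "0 \<le> \<delta>"
  obtains C where "finite C" "C \<subseteq> C2X" "A \<subseteq> (\<Union>c\<in>C. {y. dd c y \<le> \<delta>})" "card C = covnum C2X dd A \<delta>"
proof -
  let ?K = "card ` {C. finite C \<and> C \<subseteq> C2X \<and> A \<subseteq> (\<Union>c\<in>C. {y. dd c y \<le> \<delta>})}"
  have "A \<subseteq> (\<Union>c\<in>A. {y. dd c y \<le> \<delta>})"
  proof
    fix y assume "y \<in> A"
    then have "dd y y = 0" using assms(2) c2dist_self C2X_C2 by blast
    then show "y \<in> (\<Union>c\<in>A. {y. dd c y \<le> \<delta>})" using \<open>y \<in> A\<close> assms(3) by (intro UN_I[of y]) auto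
  qed
  then have "A \<in> {C. finite C \<and> C \<subseteq> C2X \<and> A \<subseteq> (\<Union>c\<in>C. {y. dd c y \<le> \<delta>})}"
    using assms(1,2) by blast
  then have "?K \<noteq> {}" by blast
  then have "Inf ?K \<in> ?K" by (rule Inf_nat_def1)
  then show ?thesis using that unfolding covnum_def by auto
qed

lemma card_le_covnum:
  assumes F: "finite F" "F \<subseteq> (C2X :: (real^'m \<Rightarrow> real) set)" and A: "A \<subseteq> F" and \<delta>: "0 \<le> \<delta>"
    and P: "\<And>c. c \<in> C2X \<Longrightarrow> real (card (F \<inter> {y. dd c y \<le> \<delta>})) \<le> P"
  shows "real (card A) \<le> P * real (covnum C2X dd A \<delta>)"
proof -
  have Af: "finite A" using A F finite_subset by blast
  obtain C where C: "finite C" "C \<subseteq> C2X" "A \<subseteq> (\<Union>c\<in>C. {y. dd c y \<le> \<delta>})" "card C = covnum C2X dd A \<delta>"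
    using covnum_attained[OF Af _ \<delta>] A F by blast
  have "A \<subseteq> (\<Union>c\<in>C. F \<inter> {y. dd c y \<le> \<delta>})" using C(3) A by blast
  then have "card A \<le> card (\<Union>c\<in>C. F \<inter> {y. dd c y \<le> \<delta>})"
    by (rule card_mono[rotated]) (use F C in auto)
  also have "\<dots> \<le> (\<Sum>c\<in>C. card (F \<inter> {y. dd c y \<le> \<delta>}))" by (rule card_UN_le[OF C(1)])
  finally have "real (card A) \<le> real (\<Sum>c\<in>C. card (F \<inter> {y. dd c y \<le> \<delta>}))"
    by (simp only: of_nat_le_iff)
  also have "\<dots> = (\<Sum>c\<in>C. real (card (F \<inter> {y. dd c y \<le> \<delta>})))" by (rule of_nat_sum)
  also have "\<dots> \<le> (\<Sum>c\<in>C. P)" by (rule sum_mono, rule P) (use C(2) in blast)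
  also have "\<dots> = P * real (card C)" by simp
  finally show ?thesis using C(4) by simp
qed

lemma dbl_step:
  assumes dbl: "doubling dd F D" and F: "finite F" and c: "c \<in> F" and r: "r > 0" and M: "0 \<le> M"
    and hyp: "\<And>c'. c' \<in> F \<Longrightarrow> real (card (F \<inter> {y. dd c' y \<le> r / 2})) \<le> M"
  shows "real (card (F \<inter> {y. dd c y \<le> (r :: real)})) \<le> D * M"
proof -
  obtain C where C: "finite C" "C \<subseteq> F" "real (card C) \<le> D"
    "{y\<in>F. dd c y \<le> r} \<subseteq> (\<Union>c1\<in>C. {y. dd c1 y \<le> r / 2})"
    using dbl[unfolded doubling_def, rule_format, OF c r] by blast
  have "F \<inter> {y. dd c y \<le> r} \<subseteq> (\<Union>c1\<in>C. F \<inter> {y. dd c1 y \<le> r / 2})" using C(4) by blast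
  then have "card (F \<inter> {y. dd c y \<le> r}) \<le> card (\<Union>c1\<in>C. F \<inter> {y. dd c1 y \<le> r / 2})"
    by (rule card_mono[rotated]) (use F C in auto)
  also have "\<dots> \<le> (\<Sum>c1\<in>C. card (F \<inter> {y. dd c1 y \<le> r / 2}))" by (rule card_UN_le[OF C(1)])
  finally have "real (card (F \<inter> {y. dd c y \<le> r})) \<le> real (\<Sum>c1\<in>C. card (F \<inter> {y. dd c1 y \<le> r / 2}))"
    by (simp only: of_nat_le_iff)
  also have "\<dots> = (\<Sum>c1\<in>C. real (card (F \<inter> {y. dd c1 y \<le> r / 2})))" by (rule of_nat_sum)
  also have "\<dots> \<le> (\<Sum>c1\<in>C. M)" by (rule sum_mono, rule hyp) (use C(2) in blast)
  also have "\<dots> = real (card C) * M" by simp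
  also have "\<dots> \<le> D * M" by (rule mult_right_mono[OF C(3) M])
  finally show ?thesis .
qed

lemma ball_count:
  assumes dbl: "doubling dd F D" and F: "finite F" "F \<subseteq> (C2X :: (real^'m \<Rightarrow> real) set)"
    and sep: "separated dd F \<delta>" and \<delta>: "0 < \<delta>" and c: "c \<in> C2X"
  shows "real (card (F \<inter> {y. dd c y \<le> \<delta>})) \<le> (max 0 D) ^ 3"
proof (cases "F \<inter> {y. dd c y \<le> \<delta>} = {}")
  case True
  then show ?thesis by simp
next
  case False
  then obtain a where a: "a \<in> F" "dd c a \<le> \<delta>" by blast
  have C2F: "C2_on UC y" if "y \<in> F" for y using F(2) that C2X_C2 by blast
  have cC: "C2_on UC c" using c C2X_C2 by blast
  define D' where "D' = max 0 D"
  have D'0: "0 \<le> D'" unfolding D'_def by simp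
  have dblD': "doubling dd F D'" unfolding doubling_def
  proof (intro ballI allI impI)
    fix x r assume "x \<in> F" "(0::real) < r"
    then obtain C where C: "finite C" "C \<subseteq> F" "real (card C) \<le> D"
      "{y\<in>F. dd x y \<le> r} \<subseteq> (\<Union>c\<in>C. {y. dd c y \<le> r / 2})"
      using dbl[unfolded doubling_def, rule_format, OF \<open>x \<in> F\<close> \<open>0 < r\<close>] by blast
    have "real (card C) \<le> D'" unfolding D'_def using C(3) by linarith
    then show "\<exists>C. finite C \<and> C \<subseteq> F \<and> real (card C) \<le> D' \<and> {y\<in>F. dd x y \<le> r} \<subseteq> (\<Union>c\<in>C. {y. dd c y \<le> r / 2})"
      using C by blast
  qed
  have s0: "real (card (F \<inter> {y. dd c' y \<le> \<delta> / 4})) \<le> 1" if c': "c' \<in> F" for c'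
  proof -
    have "card (F \<inter> {y. dd c' y \<le> \<delta> / 4}) \<le> Suc 0"
    proof (rule card_le_Suc0_iff_eq[THEN iffD2])
      show "finite (F \<inter> {y. dd c' y \<le> \<delta> / 4})" using F by simp
      show "\<forall>y\<in>F \<inter> {y. dd c' y \<le> \<delta> / 4}. \<forall>z\<in>F \<inter> {y. dd c' y \<le> \<delta> / 4}. y = z"
      proof (intro ballI, rule ccontr)
        fix y z assume y: "y \<in> F \<inter> {y. dd c' y \<le> \<delta> / 4}" and z: "z \<in> F \<inter> {y. dd c' y \<le> \<delta> / 4}" and ne: "y \<noteq> z"
        have "dd y z \<le> dd y c' + dd c' z" using c2dist_tri[of y z c'] C2F y z c' by auto
        also have "dd y c' = dd c' y" using c2dist_sym C2F y c' by auto
        finally have "dd y z \<le> \<delta> / 2" using y z by auto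
        moreover have "dd y z \<ge> \<delta>" using sep y z ne unfolding separated_def by auto
        ultimately show False using \<delta> by simp
      qed
    qed
    then show ?thesis by simp
  qed
  have s1: "real (card (F \<inter> {y. dd c' y \<le> \<delta> / 2})) \<le> D' * 1" if "c' \<in> F" for c'
    by (rule dbl_step[OF dblD' F(1) that]) (use \<delta> s0 in auto)
  have s2: "real (card (F \<inter> {y. dd c' y \<le> \<delta>})) \<le> D' * (D' * 1)" if "c' \<in> F" for c'
    by (rule dbl_step[OF dblD' F(1) that]) (use \<delta> s1 D'0 in auto)
  have s3: "real (card (F \<inter> {y. dd c' y \<le> 2 * \<delta>})) \<le> D' * (D' * (D' * 1))" if "c' \<in> F" for c'
    by (rule dbl_step[OF dblD' F(1) that]) (use \<delta> s2 D'0 in auto)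
  have sub: "F \<inter> {y. dd c y \<le> \<delta>} \<subseteq> F \<inter> {y. dd a y \<le> 2 * \<delta>}"
  proof
    fix y assume y: "y \<in> F \<inter> {y. dd c y \<le> \<delta>}"
    have "dd a y \<le> dd a c + dd c y" using c2dist_tri[of a y c] C2F a y cC by auto
    also have "dd a c = dd c a" using c2dist_sym C2F a cC by auto
    finally show "y \<in> F \<inter> {y. dd a y \<le> 2 * \<delta>}" using y a by auto
  qed
  have "card (F \<inter> {y. dd c y \<le> \<delta>}) \<le> card (F \<inter> {y. dd a y \<le> 2 * \<delta>})"
    by (rule card_mono[OF _ sub]) (use F in simp)
  then have "real (card (F \<inter> {y. dd c y \<le> \<delta>})) \<le> D' * (D' * (D' * 1))" using s3[OF a(1)] by linarith
  then show ?thesis unfolding D'_def by (simp add: power3_eq_cube)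
qed

lemma count_bound:
  fixes F :: "(real^'m \<Rightarrow> real) set"
  assumes F: "finite F" "F \<subseteq> C2X" and dbl: "doubling dd F D" and sep: "separated dd F \<delta>"
    and \<delta>: "0 < \<delta>" and tc: "delta_t_C_set C2X dd F \<delta> t Cc" and f: "f \<in> F" and \<rho>: "\<delta> \<le> \<rho>"
    and Cc: "0 \<le> Cc"
  shows "real (card {g\<in>F. dd f g \<le> \<rho>}) \<le> (max 0 D)^3 * (Cc * \<rho> powr t * real (card F))"
proof -
  define A where "A = F \<inter> {y. dd f y \<le> \<rho>}"
  have Aeq: "{g\<in>F. dd f g \<le> \<rho>} = A" unfolding A_def by auto
  have fX: "f \<in> C2X" using f F by blast
  have "real (card A) \<le> (max 0 D)^3 * real (covnum C2X dd A \<delta>)"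
    by (rule card_le_covnum[OF F _ _ ball_count[OF dbl F sep \<delta>]]) (use \<delta> in \<open>auto simp: A_def\<close>)
  also have "real (covnum C2X dd A \<delta>) \<le> Cc * \<rho> powr t * real (covnum C2X dd F \<delta>)"
    using tc fX \<rho> unfolding delta_t_C_set_def A_def by blast
  also have "real (covnum C2X dd F \<delta>) \<le> real (card F)"
    using covnum_le_card[OF F] \<delta> by simp
  finally show ?thesis unfolding Aeq
    using Cc by (simp add: mult_left_mono)
qed

lemma dyadic_sum:
  fixes F :: "'a set" and r w :: "'a \<Rightarrow> real"
  assumes F: "finite F" and \<delta>: "0 < \<delta>" and t: "0 < t" "t \<le> 1"
    and rK: "\<And>g. g \<in> F \<Longrightarrow> r g \<le> 2^Km * \<delta>"
    and w1: "\<And>g. g \<in> F \<Longrightarrow> w g \<le> 1"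
    and w2: "\<And>g. g \<in> F \<Longrightarrow> \<delta> < r g \<Longrightarrow> w g \<le> B * \<delta> / r g"
    and B: "1 \<le> B"
    and cnt: "\<And>\<rho>. \<delta> \<le> \<rho> \<Longrightarrow> real (card {g\<in>F. r g \<le> \<rho>}) \<le> Q * \<rho> powr t"
    and Q: "0 \<le> Q"
  shows "(\<Sum>g\<in>F. w g) \<le> real (Km + 1) * (2 * B) * Q * \<delta> powr t"
proof -
  define c where "c k = (if k = 0 then 1 else 2 * B / 2^k)" for k :: nat
  have c0: "0 \<le> c k" for k unfolding c_def using B by simp
  have pt: "w g \<le> (\<Sum>k\<in>{..Km}. if r g \<le> 2^k * \<delta> then c k else 0)" if g: "g \<in> F" for g
  proof -
    have ex: "\<exists>k. r g \<le> 2^k * \<delta>" using rK[OF g] by blast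
    define k0 where "k0 = (LEAST k. r g \<le> 2^k * \<delta>)"
    have k0: "r g \<le> 2^k0 * \<delta>" unfolding k0_def by (rule LeastI_ex[OF ex])
    have k0K: "k0 \<le> Km" unfolding k0_def by (rule Least_le) (rule rK[OF g])
    have wc: "w g \<le> c k0"
    proof (cases "k0 = 0")
      case True
      then show ?thesis using w1[OF g] unfolding c_def by simp
    next
      case False
      have "\<not> r g \<le> 2^(k0-1) * \<delta>" unfolding k0_def
        by (rule not_less_Least) (use False in \<open>simp add: k0_def\<close>)
      then have lt: "2^(k0-1) * \<delta> < r g" by simp
      have p1: "(1::real) \<le> 2^(k0-1)" by simp
      have "\<delta> \<le> 2^(k0-1) * \<delta>" using p1 \<delta> by simp
      then have dr: "\<delta> < r g" using lt by linarith
      have "w g \<le> B * \<delta> / r g" by (rule w2[OF g dr])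
      also have "\<dots> \<le> B * \<delta> / (2^(k0-1) * \<delta>)"
      proof (rule divide_left_mono)
        have pos: "0 < 2^(k0-1) * \<delta>" using \<delta> by simp
        have rg: "0 < r g" using pos lt by linarith
        show "0 < r g * (2^(k0-1) * \<delta>)" by (rule mult_pos_pos[OF rg pos])
      qed (use lt B \<delta> in auto)
      also have "\<dots> = 2 * B / 2^k0"
      proof -
        have "(2::real)^k0 = 2 * 2^(k0-1)" using False by (cases k0) auto
        then show ?thesis using \<delta> by simp
      qed
      finally show ?thesis unfolding c_def using False by simp
    qed
    also have "c k0 = (if r g \<le> 2^k0 * \<delta> then c k0 else 0)" using k0 by simp
    also have "\<dots> \<le> (\<Sum>k\<in>{..Km}. if r g \<le> 2^k * \<delta> then c k else 0)"
      by (rule member_le_sum[of k0 "{..Km}" "\<lambda>k. if r g \<le> 2^k * \<delta> then c k else 0"]) (use k0K c0 in auto)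
    finally show ?thesis .
  qed
  have "(\<Sum>g\<in>F. w g) \<le> (\<Sum>g\<in>F. \<Sum>k\<in>{..Km}. if r g \<le> 2^k * \<delta> then c k else 0)"
    by (rule sum_mono) (rule pt)
  also have "\<dots> = (\<Sum>k\<in>{..Km}. \<Sum>g\<in>F. if r g \<le> 2^k * \<delta> then c k else 0)" by (rule sum.swap)
  also have "\<dots> = (\<Sum>k\<in>{..Km}. c k * real (card {g\<in>F. r g \<le> 2^k * \<delta>}))"
  proof (rule sum.cong[OF refl])
    fix k
    have "(\<Sum>g\<in>F. if r g \<le> 2^k * \<delta> then c k else 0) = (\<Sum>g\<in>{g\<in>F. r g \<le> 2^k * \<delta>}. c k)"
      by (rule sum.inter_filter[OF F, symmetric])
    also have "\<dots> = c k * real (card {g\<in>F. r g \<le> 2^k * \<delta>})" by simp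
    finally show "(\<Sum>g\<in>F. if r g \<le> 2^k * \<delta> then c k else 0) = c k * real (card {g\<in>F. r g \<le> 2^k * \<delta>})" .
  qed
  also have "\<dots> \<le> (\<Sum>k\<in>{..Km}. 2 * B * Q * \<delta> powr t)"
  proof (rule sum_mono)
    fix k assume "k \<in> {..Km}"
    have dk: "\<delta> \<le> 2^k * \<delta>" using \<delta> by simp
    have "c k * real (card {g\<in>F. r g \<le> 2^k * \<delta>}) \<le> c k * (Q * (2^k * \<delta>) powr t)"
      by (rule mult_left_mono[OF cnt[OF dk] c0])
    also have "(2^k * \<delta>) powr t = (2^k) powr t * \<delta> powr t"
      using \<delta> by (simp add: powr_mult)
    also have "((2::real)^k) powr t \<le> 2^k"
    proof -
      have "((2::real)^k) powr t \<le> (2^k) powr 1" by (rule powr_mono) (use t in auto)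
      then show ?thesis by simp
    qed
    then have "c k * (Q * (((2::real)^k) powr t * \<delta> powr t)) \<le> c k * (Q * (2^k * \<delta> powr t))"
      using c0[of k] Q by (intro mult_left_mono mult_right_mono) auto
    also have "c k * (Q * (2^k * \<delta> powr t)) \<le> 2 * B * Q * \<delta> powr t"
    proof (cases "k = 0")
      case True
      have "Q * \<delta> powr t \<le> 2 * B * (Q * \<delta> powr t)"
        using B Q by (intro mult_right_mono[of 1 "2 * B", simplified]) auto
      then show ?thesis using True unfolding c_def by (simp add: mult.assoc)
    next
      case False
      then show ?thesis unfolding c_def by simp
    qed
    finally show "c k * real (card {g\<in>F. r g \<le> 2^k * \<delta>}) \<le> 2 * B * Q * \<delta> powr t" .
  qed
  also have "\<dots> = real (Km + 1) * (2 * B) * Q * \<delta> powr t" by simp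
  finally show ?thesis .
qed

lemma delta0_exists:
  assumes \<epsilon>: "0 < \<epsilon>"
  shows "\<exists>\<delta>0\<in>{0<..1/2}. \<forall>\<delta>\<in>{0<..\<delta>0}. (1 + log 2 (1 / \<delta>))^2 \<le> \<delta> powr (-\<epsilon>)"
proof -
  define c where "c = 4 / (\<epsilon> * ln 2)"
  have c0: "0 < c" unfolding c_def using \<epsilon> by simp
  define \<delta>0 where "\<delta>0 = min (1/2) ((1 + c) powr (-4 / \<epsilon>))"
  have d0: "0 < \<delta>0" unfolding \<delta>0_def using c0 by simp
  show ?thesis
  proof (intro bexI ballI)
    show "\<delta>0 \<in> {0<..1/2}" using d0 unfolding \<delta>0_def by auto
    fix \<delta> assume "\<delta> \<in> {0<..\<delta>0}"
    then have \<delta>: "0 < \<delta>" "\<delta> \<le> \<delta>0" by auto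
    define x where "x = 1 / \<delta>"
    have x0: "0 < x" unfolding x_def using \<delta> by simp
    have x1: "1 \<le> x"
    proof -
      have "\<delta> \<le> 1" using \<delta> unfolding \<delta>0_def by simp
      then show ?thesis unfolding x_def using \<delta> by simp
    qed
    have xbig: "(1 + c) powr (4 / \<epsilon>) \<le> x"
    proof -
      have "\<delta> \<le> (1 + c) powr (-4 / \<epsilon>)" using \<delta> unfolding \<delta>0_def by simp
      then have "1 / (1 + c) powr (-4 / \<epsilon>) \<le> 1 / \<delta>" using \<delta> c0 by (intro divide_left_mono) auto
      moreover have "1 / (1 + c) powr (-4 / \<epsilon>) = (1 + c) powr (4 / \<epsilon>)"
        using c0 by (simp add: powr_minus_divide powr_minus divide_inverse)
      ultimately show ?thesis unfolding x_def by simp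
    qed
    define y where "y = x powr (\<epsilon> / 4)"
    have y1: "1 \<le> y" unfolding y_def using x1 \<epsilon> by (intro ge_one_powr_ge_zero) auto
    have lnx: "ln x \<le> (4 / \<epsilon>) * y"
    proof -
      have "ln y = (\<epsilon> / 4) * ln x" unfolding y_def using x0 by (simp add: ln_powr)
      moreover have "ln y \<le> y - 1" using y1 by (intro ln_le_minus_one) auto
      ultimately have "(\<epsilon> / 4) * ln x \<le> y" by linarith
      then show ?thesis using \<epsilon> by (simp add: field_simps)
    qed
    have l2: "log 2 x \<le> c * y"
    proof -
      have "log 2 x = ln x / ln 2" by (simp add: log_def)
      also have "\<dots> \<le> (4 / \<epsilon>) * y / ln 2" by (rule divide_right_mono[OF lnx]) simp
      also have "\<dots> = c * y" unfolding c_def by simp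
      finally show ?thesis .
    qed
    have lx0: "0 \<le> log 2 x" using x1 by simp
    have "1 + log 2 x \<le> (1 + c) * y" using l2 y1 c0 by (simp add: algebra_simps)
    then have sq: "(1 + log 2 x)^2 \<le> ((1 + c) * y)^2" using lx0 by (intro power_mono) auto
    have "(1 + c)^2 \<le> x powr (\<epsilon> / 2)"
    proof -
      have "((1 + c) powr (4 / \<epsilon>)) powr (\<epsilon> / 2) \<le> x powr (\<epsilon> / 2)"
        by (rule powr_mono2) (use \<epsilon> xbig c0 in auto)
      moreover have "((1 + c) powr (4 / \<epsilon>)) powr (\<epsilon> / 2) = (1 + c)^2"
      proof -
        have "((1 + c) powr (4 / \<epsilon>)) powr (\<epsilon> / 2) = (1 + c) powr ((4 / \<epsilon>) * (\<epsilon> / 2))"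
          by (rule powr_powr)
        also have "(4 / \<epsilon>) * (\<epsilon> / 2) = 2" using \<epsilon> by simp
        also have "(1 + c) powr 2 = (1 + c)^2" using c0 by (simp add: powr_numeral)
        finally show ?thesis .
      qed
      ultimately show ?thesis by simp
    qed
    moreover have "y^2 = x powr (\<epsilon> / 2)"
    proof -
      have "y^2 = y * y" by (simp add: power2_eq_square)
      also have "\<dots> = x powr (\<epsilon> / 4 + \<epsilon> / 4)" unfolding y_def by (rule powr_add[symmetric])
      also have "\<epsilon> / 4 + \<epsilon> / 4 = \<epsilon> / 2" by simp
      finally show ?thesis .
    qed
    ultimately have "((1 + c) * y)^2 \<le> x powr (\<epsilon> / 2) * x powr (\<epsilon> / 2)"
      unfolding power_mult_distrib by (metis mult_right_mono zero_le_power2)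
    also have "\<dots> = x powr (\<epsilon> / 2 + \<epsilon> / 2)" by (rule powr_add[symmetric])
    also have "\<epsilon> / 2 + \<epsilon> / 2 = \<epsilon>" by simp
    also have "x powr \<epsilon> = \<delta> powr (-\<epsilon>)"
    proof -
      have "x powr \<epsilon> = 1 / \<delta> powr \<epsilon>" unfolding x_def using \<delta> by (simp add: powr_divide)
      also have "\<dots> = \<delta> powr (-\<epsilon>)" by (simp add: powr_minus divide_inverse)
      finally show ?thesis .
    qed
    finally show "(1 + log 2 (1 / \<delta>))^2 \<le> \<delta> powr (-\<epsilon>)" using sq unfolding x_def by linarith
  qed
qed

lemma Asub_nonneg: "0 < \<kappa> \<Longrightarrow> 0 \<le> Asub m \<kappa>"
proof -
  assume k: "0 < \<kappa>"
  have a: "0 \<le> real (nat \<lceil>8 * real m ^ 2 / \<kappa>\<rceil>) ^ m" by (rule zero_le_power, rule of_nat_0_le_iff)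
  have b: "0 \<le> real (nat \<lceil>64 * real m ^ 2 / \<kappa>\<rceil>) ^ m" by (rule zero_le_power, rule of_nat_0_le_iff)
  have c: "0 \<le> 48 * real m / \<kappa> + (16 / \<kappa>) ^ m" using k by simp
  show ?thesis unfolding Asub_def using a b c by (intro mult_nonneg_nonneg) linarith+
qed

lemma measure_UC: "measure lebesgue (UC :: (real^'m) set) = 1"
  using measure_cube[of 1 "0::real^'m"] unfolding cube01 unit_cube_def by simp

lemma main_bound:
  fixes F :: "(real^'m \<Rightarrow> real) set"
  assumes m2: "CARD('m) \<ge> 2" and Ffin: "finite F" and FX: "F \<subseteq> C2X"
    and sep: "separated dd F \<delta>" and tc: "delta_t_C_set C2X dd F \<delta> t (\<delta> powr (-\<epsilon>))"
    and cin: "cinematic UC K D \<alpha> \<eta>0 F"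
    and \<delta>: "0 < \<delta>" and t: "0 < t" "t \<le> 1"
  shows "set_lebesgue_integral lborel (UC \<times> {0..1}) (\<lambda>p. (\<Sum>f\<in>F. indicator (fdelta f \<delta>) p)\<^sup>2)
     \<le> 16 * max 1 (Asub CARD('m) (min 1 (1 / K))) * (max 0 D)^3 * (1 + max 0 (log 2 (K / \<delta>)))^2
        * \<delta> powr (1 + t - \<epsilon>) * real (card F)^2"
proof -
  have K: "0 < K" and C2F: "\<forall>f\<in>F. C2_on UC f"
    and g0ex: "\<exists>g. C2_on UC g \<and> (\<forall>f\<in>F. c2dist UC f g \<le> K / 2)"
    and dbl: "doubling dd F D"
    and c3: "\<forall>f\<in>F. \<forall>g\<in>F. \<forall>\<xi>::real^'m. norm \<xi> = 1 \<longrightarrow>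
        (INF x\<in>UC. \<bar>f x - g x\<bar> + norm (grad_on UC (\<lambda>y. f y - g y) x)
                  + \<bar>dd2 UC (\<lambda>y. f y - g y) \<xi> x\<bar>) \<ge> c2dist UC f g / K"
    using cin unfolding cinematic_def by auto
  obtain g0 where g0: "C2_on UC g0" "\<And>f. f \<in> F \<Longrightarrow> dd f g0 \<le> K / 2" using g0ex by blast
  have diam: "dd f g \<le> K" if "f \<in> F" "g \<in> F" for f g
  proof -
    have "dd f g \<le> dd f g0 + dd g0 g" by (rule c2dist_tri) (use C2F that g0 in auto)
    also have "dd g0 g = dd g g0" by (rule c2dist_sym) (use C2F that g0 in auto)
    finally show ?thesis using g0(2)[OF that(1)] g0(2)[OF that(2)] by linarith
  qed
  have cont: "continuous_on UC f" if "f \<in> F" for f using c2_cont(1) C2F that by blast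
  define A where "A = Asub CARD('m) (min 1 (1 / K))"
  define MA where "MA = max 1 A"
  define P where "P = (max 0 D)^3"
  define L where "L = 1 + max 0 (log 2 (K / \<delta>))"
  define Km where "Km = nat \<lceil>log 2 (K / \<delta>)\<rceil>"
  define B where "B = 2 * MA * L"
  define Q where "Q = P * (\<delta> powr (-\<epsilon>) * real (card F))"
  define E where "E f g = {x\<in>UC. \<bar>f x - g x\<bar> \<le> 2 * \<delta>}" for f g :: "real^'m \<Rightarrow> real"
  have A0: "0 \<le> A" unfolding A_def by (rule Asub_nonneg) (use K in simp)
  have MA1: "1 \<le> MA" "A \<le> MA" unfolding MA_def by auto
  have P0: "0 \<le> P" unfolding P_def by simp
  have L1: "1 \<le> L" unfolding L_def by simp
  have ML1: "1 \<le> MA * L" using MA1 L1 mult_mono[of 1 MA 1 L] by simp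
  have B1: "2 \<le> B" unfolding B_def using ML1 by simp
  have Q0: "0 \<le> Q" unfolding Q_def using P0 by simp
  have KmL: "real Km \<le> L" unfolding Km_def L_def by linarith
  have Kle: "K \<le> 2^Km * \<delta>"
  proof -
    have "log 2 (K / \<delta>) \<le> real Km" unfolding Km_def by linarith
    then have "2 powr (log 2 (K / \<delta>)) \<le> 2 powr (real Km)" by simp
    then have "K / \<delta> \<le> 2^Km" using K \<delta> by (simp add: powr_realpow)
    then show ?thesis using \<delta> by (simp add: field_simps)
  qed
  have Ecomp: "compact (E f g)" if "f \<in> F" "g \<in> F" for f g
  proof -
    have "closed (E f g)" unfolding E_def by (rule closed_E[OF cont[OF that(1)] cont[OF that(2)]])
    moreover have "bounded (E f g)" using compact_imp_bounded[OF UC_compact]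
      by (rule bounded_subset) (auto simp: E_def)
    ultimately show ?thesis using compact_eq_bounded_closed by blast
  qed
  have perf: "(\<Sum>g\<in>F. measure lebesgue (E f g)) \<le> real (Km + 1) * (2 * B) * Q * \<delta> powr t"
    if f: "f \<in> F" for f
  proof (rule dyadic_sum[OF Ffin \<delta> t, where r = "\<lambda>g. dd f g"])
    fix g assume g: "g \<in> F"
    show "dd f g \<le> 2^Km * \<delta>" using diam[OF f g] Kle by linarith
    have "measure lebesgue (E f g) \<le> measure lebesgue (UC :: (real^'m) set)"
      by (rule measure_mono_fmeasurable)
         (use lmeasurable_compact[OF Ecomp[OF f g]] in \<open>auto simp: E_def unit_cube_def\<close>)
    then show w1: "measure lebesgue (E f g) \<le> 1" using measure_UC[where 'm='m] by linarith
    assume dr: "\<delta> < dd f g"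
    show "measure lebesgue (E f g) \<le> B * \<delta> / dd f g"
    proof (cases "2 * \<delta> \<le> dd f g")
      case True
      have r0: "0 < dd f g" using dr \<delta> by linarith
      have "measure lebesgue (E f g) \<le> A * (2 * \<delta> / dd f g) * (1 + log 2 (dd f g / (2 * \<delta>)))"
        unfolding E_def A_def
        by (rule pair_sublevel[OF m2 _ _ K _ \<delta> True]) (use C2F f g c3 in auto)
      also have "\<dots> \<le> MA * (2 * \<delta> / dd f g) * L"
      proof (rule mult_mono)
        show "A * (2 * \<delta> / dd f g) \<le> MA * (2 * \<delta> / dd f g)"
          using MA1(2) r0 \<delta> by (intro mult_right_mono) auto
        have "dd f g / (2 * \<delta>) \<le> K / \<delta>"
        proof -
          have "dd f g / (2 * \<delta>) \<le> dd f g / \<delta>" using r0 \<delta> by (intro divide_left_mono) auto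
          also have "\<dots> \<le> K / \<delta>" using diam[OF f g] \<delta> by (intro divide_right_mono) auto
          finally show ?thesis .
        qed
        then have "log 2 (dd f g / (2 * \<delta>)) \<le> log 2 (K / \<delta>)"
          by (intro log_mono) (use r0 \<delta> in auto)
        then show "1 + log 2 (dd f g / (2 * \<delta>)) \<le> L" unfolding L_def by linarith
        show "0 \<le> MA * (2 * \<delta> / dd f g)" using MA1 r0 \<delta> by simp
        have "1 \<le> dd f g / (2 * \<delta>)" using True \<delta> by simp
        then show "0 \<le> 1 + log 2 (dd f g / (2 * \<delta>))" by simp
      qed
      also have "\<dots> = B * \<delta> / dd f g" unfolding B_def by simp
      finally show ?thesis .
    next
      case False
      have r0: "0 < dd f g" using dr \<delta> by linarith
      have "1 \<le> 2 * \<delta> / dd f g" using False r0 by simp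
      also have "\<dots> \<le> B * \<delta> / dd f g" using B1 \<delta> r0 by (intro divide_right_mono) auto
      finally show ?thesis using w1 by linarith
    qed
  next
    show "1 \<le> B" using B1 by simp
    fix \<rho> assume \<rho>: "\<delta> \<le> \<rho>"
    have "real (card {g\<in>F. dd f g \<le> \<rho>}) \<le> (max 0 D)^3 * (\<delta> powr (-\<epsilon>) * \<rho> powr t * real (card F))"
      by (rule count_bound[OF Ffin FX dbl sep \<delta> tc f \<rho>]) simp
    then show "real (card {g\<in>F. dd f g \<le> \<rho>}) \<le> Q * \<rho> powr t"
      unfolding Q_def P_def by (simp add: algebra_simps)
  next
    show "0 \<le> Q" by (rule Q0)
  qed
  have "set_lebesgue_integral lborel (UC \<times> {0..1}) (\<lambda>p. (\<Sum>f\<in>F. indicator (fdelta f \<delta>) p)\<^sup>2)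
      = (\<Sum>f\<in>F. \<Sum>g\<in>F. measure lborel (UC \<times> {0..1} \<inter> fdelta f \<delta> \<inter> fdelta g \<delta>))"
    by (rule integral_expand[OF Ffin cont])
  also have "\<dots> \<le> (\<Sum>f\<in>F. \<Sum>g\<in>F. 2 * \<delta> * measure lebesgue (E f g))"
    unfolding E_def by (intro sum_mono slab_pair cont \<delta>)
  also have "\<dots> = (\<Sum>f\<in>F. 2 * \<delta> * (\<Sum>g\<in>F. measure lebesgue (E f g)))"
    by (simp add: sum_distrib_left)
  also have "\<dots> \<le> (\<Sum>f\<in>F. 2 * \<delta> * (real (Km + 1) * (2 * B) * Q * \<delta> powr t))"
    by (intro sum_mono mult_left_mono perf) (use \<delta> in auto)
  also have "\<dots> = real (card F) * (2 * \<delta> * (real (Km + 1) * (2 * B) * Q * \<delta> powr t))" by simp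
  also have "\<dots> \<le> real (card F) * (2 * \<delta> * ((2 * L) * (2 * B) * Q * \<delta> powr t))"
  proof -
    have "real (Km + 1) \<le> 2 * L" using KmL L1 by simp
    moreover have "0 \<le> (2 * B) * Q * \<delta> powr t" using B1 Q0 by simp
    ultimately have "real (Km + 1) * ((2 * B) * Q * \<delta> powr t) \<le> (2 * L) * ((2 * B) * Q * \<delta> powr t)"
      by (rule mult_right_mono)
    then show ?thesis using \<delta> by (intro mult_left_mono) (auto simp: mult.assoc)
  qed
  also have "\<dots> = 16 * MA * P * L^2 * (\<delta> * \<delta> powr t * \<delta> powr (-\<epsilon>)) * real (card F)^2"
    unfolding B_def Q_def by (simp add: power2_eq_square algebra_simps)
  also have "\<delta> * \<delta> powr t * \<delta> powr (-\<epsilon>) = \<delta> powr (1 + t - \<epsilon>)"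
    using \<delta> by (simp add: powr_add powr_diff powr_minus divide_inverse)
  finally show ?thesis unfolding MA_def A_def P_def L_def .
qed

theorem theorem1p17:
  assumes "CARD('m::finite) \<ge> 2"
  shows "\<exists>Cst :: real \<Rightarrow> real \<Rightarrow> (real \<Rightarrow> real) \<Rightarrow> real \<Rightarrow> real.
    \<forall>\<epsilon>>0. \<forall>t\<in>{0<..1}. \<exists>\<delta>0\<in>{0<..1/2}. \<forall>\<delta>\<in>{0<..\<delta>0}.
    \<forall>(F :: (real^'m \<Rightarrow> real) set) K D \<alpha> \<eta>0.
      F \<noteq> {} \<and> F \<subseteq> C2X \<and> separated (c2dist unit_cube) F \<delta> \<and>
      delta_t_C_set C2X (c2dist unit_cube) F \<delta> t (\<delta> powr (-\<epsilon>)) \<and>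
      cinematic unit_cube K D \<alpha> \<eta>0 F \<longrightarrow>
      set_lebesgue_integral lborel (unit_cube \<times> {0..1})
         (\<lambda>p. (\<Sum>f\<in>F. indicator (fdelta f \<delta>) p)\<^sup>2)
        \<le> Cst K D \<alpha> \<eta>0 * \<delta> powr (-2*\<epsilon>) * real (card F) ^ 2 * \<delta> powr (1 + t)"
proof -
  define Cst where "Cst = (\<lambda>(K::real) (D::real) (\<alpha>::real \<Rightarrow> real) (\<eta>0::real).
     16 * max 1 (Asub CARD('m) (min 1 (1 / K))) * (max 0 D)^3 * (1 + \<bar>log 2 K\<bar>)^2)"
  show ?thesis
  proof (intro exI[of _ Cst] allI impI ballI)
    fix \<epsilon> :: real assume \<epsilon>: "\<epsilon> > 0"
    fix t :: real assume t: "t \<in> {0<..1}"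
    obtain \<delta>0 where \<delta>0: "\<delta>0 \<in> {0<..1/2}" "\<forall>\<delta>\<in>{0<..\<delta>0}. (1 + log 2 (1 / \<delta>))^2 \<le> \<delta> powr (-\<epsilon>)"
      using delta0_exists[OF \<epsilon>] by blast
    show "\<exists>\<delta>0\<in>{0<..1/2}. \<forall>\<delta>\<in>{0<..\<delta>0}.
    \<forall>(F :: (real^'m \<Rightarrow> real) set) K D \<alpha> \<eta>0.
      F \<noteq> {} \<and> F \<subseteq> C2X \<and> separated (c2dist unit_cube) F \<delta> \<and>
      delta_t_C_set C2X (c2dist unit_cube) F \<delta> t (\<delta> powr (-\<epsilon>)) \<and>
      cinematic unit_cube K D \<alpha> \<eta>0 F \<longrightarrow>
      set_lebesgue_integral lborel (unit_cube \<times> {0..1})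
         (\<lambda>p. (\<Sum>f\<in>F. indicator (fdelta f \<delta>) p)\<^sup>2)
        \<le> Cst K D \<alpha> \<eta>0 * \<delta> powr (-2*\<epsilon>) * real (card F) ^ 2 * \<delta> powr (1 + t)"
    proof (intro bexI[OF _ \<delta>0(1)] ballI allI impI)
      fix \<delta> :: real and F :: "(real^'m \<Rightarrow> real) set" and K D :: real and \<alpha> :: "real \<Rightarrow> real" and \<eta>0 :: real
      assume \<delta>: "\<delta> \<in> {0<..\<delta>0}"
      assume H: "F \<noteq> {} \<and> F \<subseteq> C2X \<and> separated (c2dist unit_cube) F \<delta> \<and>
        delta_t_C_set C2X (c2dist unit_cube) F \<delta> t (\<delta> powr (-\<epsilon>)) \<and> cinematic unit_cube K D \<alpha> \<eta>0 F"
      show "set_lebesgue_integral lborel (unit_cube \<times> {0..1}) (\<lambda>p. (\<Sum>f\<in>F. indicator (fdelta f \<delta>) p)\<^sup>2)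
        \<le> Cst K D \<alpha> \<eta>0 * \<delta> powr (-2*\<epsilon>) * real (card F) ^ 2 * \<delta> powr (1 + t)"
      proof (cases "finite F")
        case False
        then show ?thesis by simp
      next
        case True
        have d0: "0 < \<delta>" "\<delta> \<le> 1/2" using \<delta> \<delta>0(1) by auto
        have t0: "0 < t" "t \<le> 1" using t by auto
        have K: "0 < K" using H unfolding cinematic_def by blast
        define MA where "MA = max 1 (Asub CARD('m) (min 1 (1 / K)))"
        define P where "P = (max 0 D)^3"
        define L where "L = 1 + max 0 (log 2 (K / \<delta>))"
        define a where "a = \<bar>log 2 K\<bar>"
        define b where "b = log 2 (1 / \<delta>)"
        have b0: "0 \<le> b" unfolding b_def using d0 by simp
        have a0: "0 \<le> a" unfolding a_def by simp
        have L1: "1 \<le> L" unfolding L_def by simp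
        have Lab: "L \<le> (1 + a) * (1 + b)"
        proof -
          have "log 2 (K / \<delta>) = log 2 K + log 2 (1 / \<delta>)"
            using K d0 by (simp add: log_divide log_mult[symmetric])
          moreover have "log 2 K \<le> a" unfolding a_def by simp
          ultimately have "max 0 (log 2 (K / \<delta>)) \<le> a + b" unfolding b_def using a0 b0[unfolded b_def] by linarith
          then have "L \<le> 1 + a + b" unfolding L_def by linarith
          also have "\<dots> \<le> (1 + a) * (1 + b)" using a0 b0 by (simp add: algebra_simps)
          finally show ?thesis .
        qed
        have L2: "L^2 \<le> (1 + a)^2 * \<delta> powr (-\<epsilon>)"
        proof -
          have "L^2 \<le> ((1 + a) * (1 + b))^2" using Lab L1 by (intro power_mono) auto
          also have "\<dots> = (1 + a)^2 * (1 + b)^2" by (simp add: power_mult_distrib)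
          also have "(1 + b)^2 \<le> \<delta> powr (-\<epsilon>)" using \<delta>0(2) \<delta> unfolding b_def by blast
          then have "(1 + a)^2 * (1 + b)^2 \<le> (1 + a)^2 * \<delta> powr (-\<epsilon>)" by (intro mult_left_mono) auto
          finally show ?thesis .
        qed
        have MB: "set_lebesgue_integral lborel (unit_cube \<times> {0..1}) (\<lambda>p. (\<Sum>f\<in>F. indicator (fdelta f \<delta>) p)\<^sup>2)
          \<le> 16 * MA * P * L^2 * \<delta> powr (1 + t - \<epsilon>) * real (card F)^2"
          unfolding MA_def P_def L_def
          by (rule main_bound[OF assms True]) (use H d0 t0 in auto)
        have X0: "0 \<le> 16 * MA * P" unfolding MA_def P_def by simp
        have Y0: "0 \<le> \<delta> powr (1 + t - \<epsilon>) * real (card F)^2" by simp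
        have "16 * MA * P * L^2 * \<delta> powr (1 + t - \<epsilon>) * real (card F)^2
            = (16 * MA * P) * L^2 * (\<delta> powr (1 + t - \<epsilon>) * real (card F)^2)" by (simp add: mult.assoc)
        also have "\<dots> \<le> (16 * MA * P) * ((1 + a)^2 * \<delta> powr (-\<epsilon>)) * (\<delta> powr (1 + t - \<epsilon>) * real (card F)^2)"
          by (intro mult_right_mono mult_left_mono L2 X0 Y0)
        also have "\<dots> = (16 * MA * P * (1 + a)^2) * (\<delta> powr (-\<epsilon>) * \<delta> powr (1 + t - \<epsilon>)) * real (card F)^2"
          by (simp add: algebra_simps)
        also have "\<delta> powr (-\<epsilon>) * \<delta> powr (1 + t - \<epsilon>) = \<delta> powr (-2*\<epsilon>) * \<delta> powr (1 + t)"
        proof -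
          have "\<delta> powr (-\<epsilon>) * \<delta> powr (1 + t - \<epsilon>) = \<delta> powr (-\<epsilon> + (1 + t - \<epsilon>))" by (rule powr_add[symmetric])
          also have "-\<epsilon> + (1 + t - \<epsilon>) = -2*\<epsilon> + (1 + t)" by simp
          also have "\<delta> powr (-2*\<epsilon> + (1 + t)) = \<delta> powr (-2*\<epsilon>) * \<delta> powr (1 + t)" by (rule powr_add)
          finally show ?thesis .
        qed
        also have "16 * MA * P * (1 + a)^2 = Cst K D \<alpha> \<eta>0" unfolding Cst_def MA_def P_def a_def by simp
        finally have "16 * MA * P * L^2 * \<delta> powr (1 + t - \<epsilon>) * real (card F)^2
            \<le> Cst K D \<alpha> \<eta>0 * (\<delta> powr (-2*\<epsilon>) * \<delta> powr (1 + t)) * real (card F)^2" .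
        with MB show ?thesis by (simp add: algebra_simps)
      qed
    qed
  qed
qed

end
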